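(* Let $f,g_1,g_2\in L^2(\mathbb{R}^2\times\mathbb{R})$ with $\|f\|_{L^2}=\|g_1\|_{L^2}=\|g_2\|_{L^2}=1$ and $\operatorname{supp}f\subset\mathfrak{P}_N\cap\mathfrak{W}^\pm_L$, $\operatorname{supp}g_k\subset\mathfrak{P}_{N_k}\cap\mathfrak{S}_{L_k}$ ($k=1,2$), where $1\le N_1\ll N_2$ or $1\le N_2\ll N_1$. Then for all dyadic $L,L_1,L_2\ge1$, $$\Big|\int f(\zeta_1-\zeta_2)g_1(\zeta_1)g_2(\zeta_2)\,d\zeta_1d\zeta_2\Big|\lesssim L_1^{5/12}L_2^{5/12}L^{5/12}N^{-1/2}\min\Big\{\frac{N_1}{N_2},\frac{N_2}{N_1}\Big\}^{1/6}.$$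
   Context: Points are $\zeta=(\xi,\tau)\in\mathbb{R}^2\times\mathbb{R}$. Dyadic numbers are $2^n$, $n\ge0$; $N,N_1,N_2$ are dyadic. $\mathfrak{P}_1=\{|\xi|\le2\}$, $\mathfrak{P}_N=\{N/2\le|\xi|\le2N\}$ ($N\ge2$); $\mathfrak{S}_1=\{|\tau+|\xi|^2|\le2\}$, $\mathfrak{S}_L=\{L/2\le|\tau+|\xi|^2|\le2L\}$; $\mathfrak{W}^\pm_1=\{|\tau\pm|\xi||\le2\}$, $\mathfrak{W}^\pm_L=\{L/2\le|\tau\pm|\xi||\le2L\}$ ($L\ge2$). $A\lesssim B$: $A\le cB$ with an absolute constant; $A\ll B$: $A\le cB$ with a sufficiently small absolute constant. *)

theory Defs
  imports "HOL-Analysis.Analysis"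
begin

type_synonym pt = "(real^2) \<times> real"

definition dyadic :: "real \<Rightarrow> bool" where
  "dyadic N \<longleftrightarrow> (\<exists>n::nat. N = 2 ^ n)"

definition Pset :: "real \<Rightarrow> pt set" where
  "Pset N = (if N = 1 then {z. norm (fst z) \<le> 2}
             else {z. N / 2 \<le> norm (fst z) \<and> norm (fst z) \<le> 2 * N})"

definition Sset :: "real \<Rightarrow> pt set" where
  "Sset L = (if L = 1 then {z. \<bar>snd z + norm (fst z) ^ 2\<bar> \<le> 2}
             else {z. L / 2 \<le> \<bar>snd z + norm (fst z) ^ 2\<bar> \<and> \<bar>snd z + norm (fst z) ^ 2\<bar> \<le> 2 * L})"

definition Wset :: "real \<Rightarrow> real \<Rightarrow> pt set" where
  "Wset s L = (if L = 1 then {z. \<bar>snd z + s * norm (fst z)\<bar> \<le> 2}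
             else {z. L / 2 \<le> \<bar>snd z + s * norm (fst z)\<bar> \<and> \<bar>snd z + s * norm (fst z)\<bar> \<le> 2 * L})"

definition unitL2_supp :: "(pt \<Rightarrow> complex) \<Rightarrow> pt set \<Rightarrow> bool" where
  "unitL2_supp f A \<longleftrightarrow> f \<in> borel_measurable lborel
     \<and> (\<integral>\<^sup>+ z. ennreal ((norm (f z))\<^sup>2) \<partial>lborel) = 1
     \<and> (\<forall>z. f z \<noteq> 0 \<longrightarrow> z \<in> A)"

end

theory Submission
  imports Defs
begin



definition oth :: "2 \<Rightarrow> 2" where "oth i = (if i = 1 then 2 else 1)"

definition T2 :: "2 \<Rightarrow> real \<times> real \<Rightarrow> real^2" where
  "T2 i = (\<lambda>(y,x). \<chi> k. if k = i then x else y)"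

lemma oth_neq[simp]: "oth i \<noteq> i" "i \<noteq> oth i"
  by (metis (full_types) exhaust_2 oth_def one_neq_zero)+ 

lemma oth_cases: "k = i \<or> k = oth i"
  by (metis (full_types) exhaust_2 oth_def)

lemma all_oth: "(\<forall>k. P k) \<longleftrightarrow> P i \<and> P (oth i)"
  using oth_cases by metis

lemma two_cases: "(i::2) = 1 \<or> i = 2"
  using exhaust_2 by metis

lemma T2_comp[simp]: "T2 i (y,x) $ i = x" "T2 i (y,x) $ oth i = y"
  by (auto simp: T2_def)

lemma T2_meas[measurable]: "T2 i \<in> borel_measurable (lborel \<Otimes>\<^sub>M lborel)"
proof -
  have "continuous_on UNIV (T2 i)"
    unfolding T2_def case_prod_beta
    apply (rule continuous_on_vec_lambda)
    subgoal for k by (cases "k = i") (auto intro!: continuous_intros)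
    done
  then have "T2 i \<in> borel_measurable borel"
    by (rule borel_measurable_continuous_onI)
  moreover have "sets (lborel \<Otimes>\<^sub>M lborel :: (real \<times> real) measure) = sets borel"
    by (metis borel_prod sets_lborel sets_pair_measure_cong)
  ultimately show ?thesis using measurable_cong_sets by blast
qed

lemma Basis_vec2: "(Basis::(real^2) set) = {axis 1 1, axis 2 1}"
  by (auto simp: Basis_vec_def UNIV_2)

lemma prod_Basis_vec2: "(\<Prod>b\<in>(Basis::(real^2) set). (v::real^2) \<bullet> b) = v$1 * v$2"
proof -
  have "axis 1 (1::real) \<noteq> (axis 2 1 :: real^2)" by (simp add: axis_eq_axis)
  then show ?thesis by (simp add: Basis_vec2 cart_eq_inner_axis)
qed

lemma lborel_T2: "distr (lborel \<Otimes>\<^sub>M lborel) borel (T2 i) = lborel"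
proof (rule lborel_eqI[symmetric])
  show "sets (distr (lborel \<Otimes>\<^sub>M lborel) borel (T2 i)) = sets borel" by simp
  fix l u :: "real^2"
  assume lu: "\<And>b. b \<in> Basis \<Longrightarrow> l \<bullet> b \<le> u \<bullet> b"
  have "\<And>k. l$k \<le> u$k" using lu[of "axis _ 1"] by (auto simp: Basis_vec_def cart_eq_inner_axis)
  have pre: "T2 i -` box l u \<inter> space (lborel \<Otimes>\<^sub>M lborel) = {l$oth i<..<u$oth i} \<times> {l$i<..<u$i}"
  proof -
    have "T2 i (y,x) \<in> box l u \<longleftrightarrow> (l$oth i < y \<and> y < u$oth i) \<and> (l$i < x \<and> x < u$i)" for y x
    proof -
      have "T2 i (y,x) \<in> box l u \<longleftrightarrow> (\<forall>k. l$k < T2 i (y,x) $ k \<and> T2 i (y,x) $ k < u$k)"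
        by (auto simp: mem_box Basis_vec_def cart_eq_inner_axis)
      also have "\<dots> \<longleftrightarrow> (l$oth i < y \<and> y < u$oth i) \<and> (l$i < x \<and> x < u$i)"
        by (subst all_oth[of _ i]) auto
      finally show ?thesis .
    qed
    then show ?thesis by (auto simp: space_pair_measure)
  qed
  have "emeasure (distr (lborel \<Otimes>\<^sub>M lborel) borel (T2 i)) (box l u)
      = emeasure (lborel \<Otimes>\<^sub>M lborel) ({l$oth i<..<u$oth i} \<times> {l$i<..<u$i})"
    by (subst emeasure_distr) (auto simp: pre)
  also have "\<dots> = ennreal ((u$oth i - l$oth i) * (u$i - l$i))"
    using \<open>\<And>k. l$k \<le> u$k\<close>
    by (simp add: lborel.emeasure_pair_measure_Times ennreal_mult emeasure_lborel_Ioo)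
  also have "(u$oth i - l$oth i) * (u$i - l$i) = (u - l)$1 * (u - l)$2"
    using two_cases[of i] by (auto simp: oth_def)
  also have "\<dots> = (\<Prod>b\<in>Basis. (u - l) \<bullet> b)" by (simp add: prod_Basis_vec2)
  finally show "emeasure (distr (lborel \<Otimes>\<^sub>M lborel) borel (T2 i)) (box l u) = ennreal (prod ((\<bullet>) (u - l)) Basis)" .
qed

lemma area_bound:
  fixes S :: "(real^2) set" and i :: 2
  assumes S: "S \<in> sets borel" and cd: "\<forall>\<xi>\<in>S. c \<le> \<xi>$oth i \<and> \<xi>$oth i \<le> d"
   and diam: "\<forall>\<xi>\<in>S. \<forall>\<eta>\<in>S. \<xi>$oth i = \<eta>$oth i \<longrightarrow> \<bar>\<xi>$i - \<eta>$i\<bar> \<le> \<delta>"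
   and d0: "0 \<le> \<delta>" and cd0: "c \<le> d"
  shows "emeasure lborel S \<le> ennreal (2*\<delta>*(d-c))"
proof -
  have Sm: "T2 i -` S \<inter> space (lborel \<Otimes>\<^sub>M lborel) \<in> sets (lborel \<Otimes>\<^sub>M lborel)"
    using S by (intro measurable_sets[OF T2_meas]) simp
  have "emeasure lborel S = emeasure (distr (lborel \<Otimes>\<^sub>M lborel) borel (T2 i)) S"
    by (simp add: lborel_T2)
  also have "\<dots> = emeasure (lborel \<Otimes>\<^sub>M lborel) (T2 i -` S \<inter> space (lborel \<Otimes>\<^sub>M lborel))"
    using S by (intro emeasure_distr) auto
  also have "\<dots> = (\<integral>\<^sup>+y. emeasure lborel (Pair y -` (T2 i -` S \<inter> space (lborel \<Otimes>\<^sub>M lborel))) \<partial>lborel)"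
    using Sm by (rule lborel.emeasure_pair_measure_alt)
  also have "\<dots> \<le> (\<integral>\<^sup>+y. ennreal (2*\<delta>) * indicator {c..d} y \<partial>lborel)"
  proof (rule nn_integral_mono)
    fix y :: real
    let ?A = "Pair y -` (T2 i -` S \<inter> space (lborel \<Otimes>\<^sub>M lborel))"
    show "emeasure lborel ?A \<le> ennreal (2*\<delta>) * indicator {c..d} y"
    proof (cases "?A = {}")
      case True then show ?thesis by simp
    next
      case False
      then obtain x0 where x0: "T2 i (y,x0) \<in> S" by (auto simp: space_pair_measure)
      have y: "y \<in> {c..d}" using cd x0 by fastforce
      have "?A \<subseteq> {x0-\<delta>..x0+\<delta>}"
      proof
        fix x assume "x \<in> ?A"
        then have "T2 i (y,x) \<in> S" by auto
        with diam x0 have "\<bar>x - x0\<bar> \<le> \<delta>" by fastforce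
        then show "x \<in> {x0-\<delta>..x0+\<delta>}" by auto
      qed
      then have "emeasure lborel ?A \<le> emeasure lborel {x0-\<delta>..x0+\<delta>}"
        by (intro emeasure_mono) auto
      also have "\<dots> = ennreal (2*\<delta>)" using d0 by simp
      finally show ?thesis using y by simp
    qed
  qed
  also have "\<dots> = ennreal (2*\<delta>) * emeasure lborel {c..d}"
    by (simp add: nn_integral_cmult_indicator)
  also have "\<dots> = ennreal (2*\<delta>*(d-c))" using cd0 d0 by (simp add: ennreal_mult)
  finally show ?thesis .
qed




lemma inner_oth: "(x::real^2) \<bullet> y = x$i*y$i + x$oth i * y$oth i"
  using two_cases[of i] by (auto simp: inner_vec_def sum_2 oth_def)

lemma norm_sq_oth: "(norm (x::real^2))^2 = (x$i)^2 + (x$oth i)^2"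
  using power2_norm_eq_inner[of x] inner_oth[of x x i] by (simp add: power2_eq_square)

lemma meas_test: "{\<xi>::real^2. norm \<xi> \<le> 2*N \<and> (2 \<le> N \<longrightarrow> N/2 \<le> norm \<xi>) \<and> \<bar>norm \<xi>^2 + s * norm (\<xi> - p) - t\<bar> \<le> W} \<in> sets borel"
  by measurable

lemma meas_test2: "{\<xi>::real^2. norm \<xi> \<le> 2*N \<and> s * \<xi>$i \<ge> h} \<in> sets borel"
  by measurable

lemma ball_area:
  fixes S :: "(real^2) set"
  assumes S: "S \<in> sets borel" and sub: "\<forall>\<xi>\<in>S. norm (\<xi> - q) \<le> R" and R: "0 \<le> R"
  shows "emeasure lborel S \<le> ennreal (8*R^2)"
proof -
  have "emeasure lborel S \<le> ennreal (2*(2*R)*((q$oth 1 + R) - (q$oth 1 - R)))"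
  proof (rule area_bound[OF S])
    show "\<forall>\<xi>\<in>S. q $ oth 1 - R \<le> \<xi> $ oth 1 \<and> \<xi> $ oth 1 \<le> q $ oth 1 + R"
    proof
      fix \<xi> assume "\<xi> \<in> S"
      then have "\<bar>(\<xi> - q) $ oth 1\<bar> \<le> R" using sub component_le_norm_cart order_trans by blast
      then show "q $ oth 1 - R \<le> \<xi> $ oth 1 \<and> \<xi> $ oth 1 \<le> q $ oth 1 + R" by auto
    qed
    show "\<forall>\<xi>\<in>S. \<forall>\<eta>\<in>S. \<xi> $ oth 1 = \<eta> $ oth 1 \<longrightarrow> \<bar>\<xi> $ 1 - \<eta> $ 1\<bar> \<le> 2 * R"
    proof (intro ballI impI)
      fix \<xi> \<eta> assume "\<xi> \<in> S" "\<eta> \<in> S"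
      then have "\<bar>(\<xi> - q) $ 1\<bar> \<le> R" "\<bar>(\<eta> - q) $ 1\<bar> \<le> R"
        using sub component_le_norm_cart order_trans by blast+
      then show "\<bar>\<xi> $ 1 - \<eta> $ 1\<bar> \<le> 2 * R" by auto
    qed
  qed (use R in auto)
  also have "2*(2*R)*((q$oth 1 + R) - (q$oth 1 - R)) = 8*R^2" by (simp add: power2_eq_square)
  finally show ?thesis .
qed

lemma big_coord:
  fixes \<xi> :: "real^2"
  assumes "0 < m" "m \<le> norm \<xi>"
  obtains i where "m/2 \<le> \<bar>\<xi>$i\<bar>"
proof -
  have "m/2 \<le> \<bar>\<xi>$1\<bar> \<or> m/2 \<le> \<bar>\<xi>$oth 1\<bar>"
  proof (rule ccontr)
    assume "\<not> ?thesis"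
    then have a: "\<bar>\<xi>$1\<bar> < m/2" "\<bar>\<xi>$oth 1\<bar> < m/2" by auto
    have "(\<xi>$1)^2 < (m/2)^2" using power_strict_mono[OF a(1) abs_ge_zero, of 2] by simp
    moreover have "(\<xi>$oth 1)^2 < (m/2)^2" using power_strict_mono[OF a(2) abs_ge_zero, of 2] by simp
    moreover have "m^2 \<le> (norm \<xi>)^2" using assms by (simp add: power_mono)
    moreover have "0 < m*m" using assms by simp
    ultimately show False using norm_sq_oth[of \<xi> 1] by (simp add: power2_eq_square)
  qed
  then show ?thesis using that by blast
qed

lemma slab_area:
  fixes S :: "(real^2) set" and \<xi> :: "real^2"
  assumes S: "S \<in> sets borel" and sub: "\<forall>\<eta>\<in>S. norm (\<eta> - q) \<le> R \<and> \<bar>cc + 2*(\<xi> \<bullet> \<eta>)\<bar> \<le> W"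
   and R: "0 \<le> R" and W: "0 \<le> W" and m: "0 < m" "m \<le> norm \<xi>"
  shows "emeasure lborel S \<le> ennreal (8*R*W/m)"
proof -
  obtain i where i: "m/2 \<le> \<bar>\<xi>$i\<bar>" using big_coord[OF m] by blast
  have "emeasure lborel S \<le> ennreal (2*(2*W/m)*((q$oth i + R) - (q$oth i - R)))"
  proof (rule area_bound[OF S])
    show "\<forall>\<eta>\<in>S. q $ oth i - R \<le> \<eta> $ oth i \<and> \<eta> $ oth i \<le> q $ oth i + R"
    proof
      fix \<eta> assume "\<eta> \<in> S"
      then have "\<bar>(\<eta> - q) $ oth i\<bar> \<le> R" using sub component_le_norm_cart order_trans by blast
      then show "q $ oth i - R \<le> \<eta> $ oth i \<and> \<eta> $ oth i \<le> q $ oth i + R" by auto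
    qed
    show "\<forall>\<eta>\<in>S. \<forall>\<eta>'\<in>S. \<eta> $ oth i = \<eta>' $ oth i \<longrightarrow> \<bar>\<eta> $ i - \<eta>' $ i\<bar> \<le> 2*W/m"
    proof (intro ballI impI)
      fix \<eta> \<eta>' assume "\<eta> \<in> S" "\<eta>' \<in> S" and eq: "\<eta> $ oth i = \<eta>' $ oth i"
      then have a: "\<bar>cc + 2*(\<xi> \<bullet> \<eta>)\<bar> \<le> W" "\<bar>cc + 2*(\<xi> \<bullet> \<eta>')\<bar> \<le> W" using sub by auto
      have "\<xi> \<bullet> \<eta> - \<xi> \<bullet> \<eta>' = \<xi>$i * (\<eta>$i - \<eta>'$i)"
        using eq by (simp add: inner_oth[of _ _ i] algebra_simps)
      then have "\<bar>2*(\<xi>$i * (\<eta>$i - \<eta>'$i))\<bar> \<le> 2*W" using a by linarith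
      then have b: "\<bar>\<xi>$i\<bar> * \<bar>\<eta>$i - \<eta>'$i\<bar> \<le> W" by (simp add: abs_mult)
      have "(m/2) * \<bar>\<eta>$i - \<eta>'$i\<bar> \<le> \<bar>\<xi>$i\<bar> * \<bar>\<eta>$i - \<eta>'$i\<bar>"
        using i by (intro mult_right_mono) auto
      with b have "m * \<bar>\<eta>$i - \<eta>'$i\<bar> \<le> 2*W" by linarith
      then show "\<bar>\<eta> $ i - \<eta>' $ i\<bar> \<le> 2*W/m" using m by (simp add: pos_le_divide_eq mult.commute)
    qed
  qed (use R W m in auto)
  also have "2*(2*W/m)*((q$oth i + R) - (q$oth i - R)) = 8*R*W/m" by (simp add: field_simps)
  finally show ?thesis .
qed

lemma piece_area:
  fixes S :: "(real^2) set"
  assumes S: "S \<in> sets borel"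
   and sub: "\<forall>\<eta>\<in>S. norm \<eta> \<le> 2*N \<and> h \<le> \<sigma> * \<eta>$i \<and> \<bar>norm \<eta>^2 + s*norm(\<eta> - p) - t\<bar> \<le> W"
   and s: "\<bar>s\<bar> \<le> 1" and \<sigma>: "\<bar>\<sigma>\<bar> = 1" and h: "1 \<le> h" and W: "0 \<le> W" and N: "0 \<le> N"
  shows "emeasure lborel S \<le> ennreal (2*(2*W/h)*(4*N))"
proof -
  have "emeasure lborel S \<le> ennreal (2*(2*W/h)*(2*N - (-2*N)))"
  proof (rule area_bound[OF S])
    show "\<forall>\<eta>\<in>S. -2*N \<le> \<eta> $ oth i \<and> \<eta> $ oth i \<le> 2*N"
    proof
      fix \<eta> assume "\<eta> \<in> S"
      then have "\<bar>\<eta> $ oth i\<bar> \<le> 2*N" using sub component_le_norm_cart order_trans by blast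
      then show "-2*N \<le> \<eta> $ oth i \<and> \<eta> $ oth i \<le> 2*N" by auto
    qed
    show "\<forall>\<eta>\<in>S. \<forall>\<eta>'\<in>S. \<eta> $ oth i = \<eta>' $ oth i \<longrightarrow> \<bar>\<eta> $ i - \<eta>' $ i\<bar> \<le> 2*W/h"
    proof (intro ballI impI)
      fix \<eta> \<eta>' assume "\<eta> \<in> S" "\<eta>' \<in> S" and eq: "\<eta> $ oth i = \<eta>' $ oth i"
      then have a: "\<bar>norm \<eta>^2 + s*norm(\<eta> - p) - t\<bar> \<le> W" "\<bar>norm \<eta>'^2 + s*norm(\<eta>' - p) - t\<bar> \<le> W"
        and hx: "h \<le> \<sigma> * \<eta>$i" "h \<le> \<sigma> * \<eta>'$i" using sub by auto
      define x where "x = \<eta>$i"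
      define x' where "x' = \<eta>'$i"
      define D where "D = \<bar>x - x'\<bar>"
      have nn: "norm \<eta>^2 - norm \<eta>'^2 = x^2 - x'^2"
        using eq by (simp add: norm_sq_oth[of _ i] x_def x'_def)
      have "(norm (\<eta> - \<eta>'))^2 = (x - x')^2"
        using eq by (simp add: norm_sq_oth[of _ i] x_def x'_def)
      then have nd: "norm (\<eta> - \<eta>') = D" unfolding D_def
        by (metis norm_ge_zero power2_abs abs_ge_zero power2_eq_iff_nonneg)
      have "\<bar>norm(\<eta> - p) - norm(\<eta>' - p)\<bar> \<le> norm ((\<eta> - p) - (\<eta>' - p))"
        by (rule norm_triangle_ineq3)
      then have tri: "\<bar>norm(\<eta> - p) - norm(\<eta>' - p)\<bar> \<le> D" using nd by simp
      have "\<bar>s*(norm(\<eta> - p) - norm(\<eta>' - p))\<bar> \<le> D"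
      proof -
        have "\<bar>s*(norm(\<eta> - p) - norm(\<eta>' - p))\<bar> = \<bar>s\<bar> * \<bar>norm(\<eta> - p) - norm(\<eta>' - p)\<bar>" by (simp add: abs_mult)
        also have "\<dots> \<le> 1 * D" using s tri by (intro mult_mono) auto
        finally show ?thesis by simp
      qed
      moreover have "\<bar>(x^2 - x'^2) + s*(norm(\<eta> - p) - norm(\<eta>' - p))\<bar> \<le> 2*W"
        using a nn by (simp add: algebra_simps)
      ultimately have c: "\<bar>x^2 - x'^2\<bar> \<le> 2*W + D" by linarith
      have "\<bar>x^2 - x'^2\<bar> = D * \<bar>x + x'\<bar>"
        by (simp add: D_def abs_mult[symmetric] power2_eq_square algebra_simps)
      moreover have "2*h \<le> \<bar>x + x'\<bar>"
      proof -
        have "2*h \<le> \<sigma> * (x + x')" using hx by (simp add: x_def x'_def algebra_simps)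
        also have "\<dots> \<le> \<bar>\<sigma> * (x + x')\<bar>" by simp
        also have "\<dots> = \<bar>x + x'\<bar>" using \<sigma> by (simp add: abs_mult)
        finally show ?thesis .
      qed
      moreover have "0 \<le> D" by (simp add: D_def)
      ultimately have "D * (2*h) \<le> 2*W + D" using c
        by (metis mult_left_mono order_trans)
      moreover have "D*h \<le> D*(2*h - 1)" by (rule mult_left_mono) (use h \<open>0 \<le> D\<close> in auto)
      moreover have "D*(2*h-1) = D*(2*h) - D" by (simp add: algebra_simps)
      ultimately have "D * h \<le> 2*W" by linarith
      then show "\<bar>\<eta> $ i - \<eta>' $ i\<bar> \<le> 2*W/h" using h
        by (simp add: D_def x_def x'_def pos_le_divide_eq)
    qed
  qed (use N W h in auto)
  also have "2*(2*W/h)*(2*N - (-2*N)) = 2*(2*W/h)*(4*N)" by simp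
  finally show ?thesis .
qed

lemma sublevel_area:
  assumes s: "\<bar>s\<bar> \<le> 1" and N: "1 \<le> N" and W: "1 \<le> W"
  shows "emeasure lborel {\<xi>::real^2. norm \<xi> \<le> 2*N \<and> (2 \<le> N \<longrightarrow> N/2 \<le> norm \<xi>) \<and> \<bar>norm \<xi>^2 + s*norm(\<xi> - p) - t\<bar> \<le> W} \<le> ennreal (2048*W)"
    (is "emeasure lborel ?S \<le> _")
proof -
  have Sm: "?S \<in> sets borel" by measurable
  show ?thesis
  proof (cases "N \<le> 8")
    case True
    have "emeasure lborel ?S \<le> ennreal (8*(2*N)^2)"
      by (rule ball_area[OF Sm, of 0]) (use N in auto)
    moreover have "8*(2*N)^2 \<le> 2048*W"
    proof -
      have "N^2 \<le> 8^2" using True N by (intro power_mono) auto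
      then show ?thesis using W by (simp add: power2_eq_square)
    qed
    ultimately show ?thesis using ennreal_leI order_trans by blast
  next
    case False
    define h where "h = N/4"
    have h1: "1 \<le> h" using False by (simp add: h_def)
    define P where "P i \<sigma> = ?S \<inter> {\<xi>::real^2. h \<le> \<sigma> * \<xi>$i}" for i \<sigma>
    have Pm: "P i \<sigma> \<in> sets borel" for i \<sigma> unfolding P_def by measurable
    have Pb: "emeasure lborel (P i \<sigma>) \<le> ennreal (512*W)" if "\<bar>\<sigma>\<bar> = 1" for i \<sigma>
    proof -
      have "emeasure lborel (P i \<sigma>) \<le> ennreal (2*(2*W/h)*(4*N))"
        by (rule piece_area[OF Pm, where N=N and h=h and \<sigma>=\<sigma> and i=i and s=s and p=p and t=t and W=W]) (use s that h1 W N in \<open>auto simp: P_def\<close>)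
      also have "2*(2*W/h)*(4*N) = 64*W" using False by (simp add: h_def field_simps)
      finally show ?thesis by (rule order_trans) (use W in simp)
    qed
    have cover: "?S \<subseteq> (P 1 1 \<union> P 1 (-1)) \<union> (P 2 1 \<union> P 2 (-1))"
    proof
      fix \<xi> assume x: "\<xi> \<in> ?S"
      then have "N/2 \<le> norm \<xi>" using False by auto
      then obtain i where i: "N/2/2 \<le> \<bar>\<xi>$i\<bar>" using big_coord[of "N/2" \<xi>] N by auto
      then have "h \<le> 1 * \<xi>$i \<or> h \<le> (-1) * \<xi>$i" by (auto simp: h_def)
      then show "\<xi> \<in> (P 1 1 \<union> P 1 (-1)) \<union> (P 2 1 \<union> P 2 (-1))"
        using two_cases[of i] x by (auto simp: P_def)
    qed
    have "emeasure lborel ?S \<le> emeasure lborel ((P 1 1 \<union> P 1 (-1)) \<union> (P 2 1 \<union> P 2 (-1)))"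
      by (rule emeasure_mono[OF cover]) (use Pm in auto)
    also have "\<dots> \<le> emeasure lborel (P 1 1 \<union> P 1 (-1)) + emeasure lborel (P 2 1 \<union> P 2 (-1))"
      by (rule emeasure_subadditive) (use Pm in auto)
    also have "\<dots> \<le> (emeasure lborel (P 1 1) + emeasure lborel (P 1 (-1))) + (emeasure lborel (P 2 1) + emeasure lborel (P 2 (-1)))"
      by (intro add_mono emeasure_subadditive) (use Pm in auto)
    also have "\<dots> \<le> (ennreal (512*W) + ennreal (512*W)) + (ennreal (512*W) + ennreal (512*W))"
      by (intro add_mono Pb) auto
    also have "\<dots> = ennreal (2048*W)" using W by (simp add: ennreal_plus[symmetric] del: ennreal_plus)
    finally show ?thesis .
  qed
qed




lemma fiber_bound:
  fixes A :: "(real^2) set" and \<alpha> \<beta> :: "real^2 \<Rightarrow> real"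
  assumes A[measurable]: "A \<in> sets borel" and [measurable]: "\<alpha> \<in> borel_measurable borel" "\<beta> \<in> borel_measurable borel"
   and w: "0 \<le> w1" "0 \<le> w2"
  shows "emeasure lborel {z::pt. fst z \<in> A \<and> \<bar>snd z + \<alpha> (fst z)\<bar> \<le> w1 \<and> \<bar>snd z + \<beta> (fst z)\<bar> \<le> w2}
     \<le> ennreal (2*min w1 w2) * emeasure lborel (A \<inter> {\<xi>. \<bar>\<alpha> \<xi> - \<beta> \<xi>\<bar> \<le> w1 + w2})"
    (is "emeasure lborel ?E \<le> _")
proof -
  have "{z \<in> space (lborel \<Otimes>\<^sub>M lborel). fst z \<in> A \<and> \<bar>snd z + \<alpha> (fst z)\<bar> \<le> w1 \<and> \<bar>snd z + \<beta> (fst z)\<bar> \<le> w2} \<in> sets (lborel \<Otimes>\<^sub>M lborel)"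
    by measurable
  then have Em: "?E \<in> sets (lborel \<Otimes>\<^sub>M lborel)" by (simp add: space_pair_measure)
  have "emeasure lborel ?E = emeasure (lborel \<Otimes>\<^sub>M lborel) ?E" by (simp add: lborel_prod)
  also have "\<dots> = (\<integral>\<^sup>+\<xi>. emeasure lborel (Pair \<xi> -` ?E) \<partial>lborel)"
    using Em by (rule lborel.emeasure_pair_measure_alt)
  also have "\<dots> \<le> (\<integral>\<^sup>+\<xi>. ennreal (2*min w1 w2) * indicator (A \<inter> {\<xi>. \<bar>\<alpha> \<xi> - \<beta> \<xi>\<bar> \<le> w1 + w2}) \<xi> \<partial>lborel)"
  proof (rule nn_integral_mono)
    fix \<xi> :: "real^2"
    show "emeasure lborel (Pair \<xi> -` ?E) \<le> ennreal (2*min w1 w2) * indicator (A \<inter> {\<xi>. \<bar>\<alpha> \<xi> - \<beta> \<xi>\<bar> \<le> w1 + w2}) \<xi>"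
    proof (cases "\<xi> \<in> A \<and> \<bar>\<alpha> \<xi> - \<beta> \<xi>\<bar> \<le> w1 + w2")
      case False
      have E0: "Pair \<xi> -` ?E = {}"
      proof (rule ccontr)
        assume "Pair \<xi> -` ?E \<noteq> {}"
        then obtain \<tau> where "\<xi> \<in> A" "\<bar>\<tau> + \<alpha> \<xi>\<bar> \<le> w1" "\<bar>\<tau> + \<beta> \<xi>\<bar> \<le> w2" by auto
        with False show False by linarith
      qed
      show ?thesis by (subst E0) simp
    next
      case True
      have "emeasure lborel (Pair \<xi> -` ?E) \<le> emeasure lborel {-\<alpha> \<xi> - w1 .. -\<alpha> \<xi> + w1}"
        by (rule emeasure_mono) auto
      also have "\<dots> = ennreal (2*w1)" using w by simp
      finally have 1: "emeasure lborel (Pair \<xi> -` ?E) \<le> ennreal (2*w1)" .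
      have "emeasure lborel (Pair \<xi> -` ?E) \<le> emeasure lborel {-\<beta> \<xi> - w2 .. -\<beta> \<xi> + w2}"
        by (rule emeasure_mono) auto
      also have "\<dots> = ennreal (2*w2)" using w by simp
      finally have 2: "emeasure lborel (Pair \<xi> -` ?E) \<le> ennreal (2*w2)" .
      have "emeasure lborel (Pair \<xi> -` ?E) \<le> ennreal (2*min w1 w2)"
        using 1 2 by (cases "w1 \<le> w2") (auto simp: min_def)
      then show ?thesis using True by simp
    qed
  qed
  also have "\<dots> = ennreal (2*min w1 w2) * emeasure lborel (A \<inter> {\<xi>. \<bar>\<alpha> \<xi> - \<beta> \<xi>\<bar> \<le> w1 + w2})"
    by (rule nn_integral_cmult_indicator) measurable
  finally show ?thesis .
qed




lemma nn_integral_translate: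
  fixes h :: "'a::euclidean_space \<Rightarrow> ennreal"
  assumes [measurable]: "h \<in> borel_measurable borel"
  shows "(\<integral>\<^sup>+x. h (x - c) \<partial>lborel) = (\<integral>\<^sup>+x. h x \<partial>lborel)"
proof -
  have "(\<integral>\<^sup>+x. h x \<partial>lborel) = (\<integral>\<^sup>+x. h x \<partial>(distr lborel borel ((+) (-c))))"
    by (simp add: lborel_distr_plus)
  also have "\<dots> = (\<integral>\<^sup>+x. h (-c + x) \<partial>lborel)"
    by (rule nn_integral_distr) auto
  finally show ?thesis by simp
qed

lemma nn_integral_reflect:
  fixes h :: "'a::euclidean_space \<Rightarrow> ennreal"
  assumes [measurable]: "h \<in> borel_measurable borel"
  shows "(\<integral>\<^sup>+x. h (c - x) \<partial>lborel) = (\<integral>\<^sup>+x. h x \<partial>lborel)"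
proof -
  have "lborel = density (distr lborel borel (\<lambda>x. c + (-1) *\<^sub>R x)) (\<lambda>_. \<bar>-1::real\<bar>^DIM('a))"
    by (rule lborel_affine) simp
  then have L: "(lborel::'a measure) = distr lborel borel (\<lambda>x. c + (-1) *\<^sub>R x)"
    by (simp add: density_1)
  have "(\<integral>\<^sup>+x. h x \<partial>lborel) = (\<integral>\<^sup>+x. h x \<partial>(distr lborel borel (\<lambda>x. c + (-1) *\<^sub>R x)))"
    by (subst L[symmetric]) simp
  also have "\<dots> = (\<integral>\<^sup>+x. h (c + (-1) *\<^sub>R x) \<partial>lborel)"
    by (rule nn_integral_distr) auto
  finally show ?thesis by simp
qed

lemma lborel_meas_iff: "(f \<in> borel_measurable lborel) = (f \<in> borel_measurable borel)"
  by simp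




definition good :: "(pt \<Rightarrow> complex) \<Rightarrow> pt set \<Rightarrow> bool" where
  "good F S \<longleftrightarrow> F \<in> borel_measurable borel \<and> (\<integral>\<^sup>+z. ennreal ((norm (F z))^2) \<partial>lborel) = 1
     \<and> (\<forall>z. F z \<noteq> 0 \<longrightarrow> z \<in> S) \<and> S \<in> sets borel"

definition JJ :: "(pt \<Rightarrow> complex) \<Rightarrow> (pt \<Rightarrow> complex) \<Rightarrow> (pt \<Rightarrow> complex) \<Rightarrow> ennreal" where
  "JJ F G1 G2 = (\<integral>\<^sup>+z. ennreal (norm (F (fst z - snd z)) * norm (G1 (fst z)) * norm (G2 (snd z))) \<partial>(lborel \<Otimes>\<^sub>M lborel))"

lemma amgm:
  fixes x y z e :: real
  assumes "0 < e" "0 \<le> x" "0 \<le> y" "0 \<le> z"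
  shows "x*y*z \<le> e/2*(x^2*z^2) + 1/(2*e)*y^2"
proof -
  have "e/2*(x^2*z^2) + 1/(2*e)*y^2 - x*y*z = (e*(x*z) - y)^2/(2*e)"
    using assms by (simp add: field_simps power2_eq_square)
  moreover have "0 \<le> (e*(x*z) - y)^2/(2*e)" using assms by simp
  ultimately show ?thesis by linarith
qed

lemma test_meas:
  assumes [measurable]: "F \<in> borel_measurable borel" "G \<in> borel_measurable borel" "(S::pt set) \<in> sets borel"
  shows "(\<lambda>z::pt\<times>pt. ennreal ((norm (F (fst z - snd z)))^2 * (norm (G (snd z)))^2) * indicator S (fst z)) \<in> borel_measurable (lborel \<Otimes>\<^sub>M lborel)"
  by measurable

lemma ennreal_sqrt_split:
  assumes "0 < K"
  shows "ennreal (sqrt K/2) * 1 + ennreal (1/(2* sqrt K)) * ennreal K = ennreal (sqrt K)"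
proof -
  have "sqrt K/2 + 1/(2* sqrt K) * K = sqrt K"
    using assms by (simp add: field_simps)
  then show ?thesis using assms by (simp add: ennreal_mult[symmetric] ennreal_plus[symmetric] del: ennreal_plus)
qed

lemma cs_b:
  assumes gF: "good F SF" and g1: "good G1 S1" and g2: "good G2 S2" and K: "0 < K"
    and fib: "\<forall>\<zeta>1\<in>S1. emeasure lborel {\<zeta>2. \<zeta>2 \<in> S2 \<and> \<zeta>1 - \<zeta>2 \<in> SF} \<le> ennreal K"
  shows "JJ F G1 G2 \<le> ennreal (sqrt K)"
proof -
  have [measurable]: "F \<in> borel_measurable borel" "G1 \<in> borel_measurable borel" "G2 \<in> borel_measurable borel"
    "SF \<in> sets borel" "S1 \<in> sets borel" "S2 \<in> sets borel"
    using gF g1 g2 by (auto simp: good_def)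
  have nF: "(\<integral>\<^sup>+z. ennreal ((norm (F z))^2) \<partial>lborel) = 1"
   and n1: "(\<integral>\<^sup>+z. ennreal ((norm (G1 z))^2) \<partial>lborel) = 1"
   and n2: "(\<integral>\<^sup>+z. ennreal ((norm (G2 z))^2) \<partial>lborel) = 1"
    using gF g1 g2 by (auto simp: good_def)
  have sF: "\<And>z. F z \<noteq> 0 \<Longrightarrow> z \<in> SF" and s1: "\<And>z. G1 z \<noteq> 0 \<Longrightarrow> z \<in> S1" and s2: "\<And>z. G2 z \<noteq> 0 \<Longrightarrow> z \<in> S2"
    using gF g1 g2 by (auto simp: good_def)
  define e where "e = sqrt K"
  have e: "0 < e" using K by (simp add: e_def)
  define T1 where "T1 = (\<lambda>z::pt\<times>pt. ennreal ((norm (F (fst z - snd z)))^2 * (norm (G2 (snd z)))^2))"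
  define T2 where "T2 = (\<lambda>z::pt\<times>pt. ennreal ((norm (G1 (fst z)))^2) * indicator S2 (snd z) * indicator SF (fst z - snd z))"
  have [measurable]: "T1 \<in> borel_measurable (lborel \<Otimes>\<^sub>M lborel)" "T2 \<in> borel_measurable (lborel \<Otimes>\<^sub>M lborel)"
    unfolding T1_def T2_def by measurable
  have pw: "ennreal (norm (F (fst z - snd z)) * norm (G1 (fst z)) * norm (G2 (snd z)))
     \<le> ennreal (e/2) * T1 z + ennreal (1/(2*e)) * T2 z" for z
  proof (cases "snd z \<in> S2 \<and> fst z - snd z \<in> SF")
    case False
    then have "F (fst z - snd z) = 0 \<or> G2 (snd z) = 0" using sF s2 by blast
    then show ?thesis by auto
  next
    case True
    have "norm (F (fst z - snd z)) * norm (G1 (fst z)) * norm (G2 (snd z))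
      \<le> e/2*((norm (F (fst z - snd z)))^2*(norm (G2 (snd z)))^2) + 1/(2*e)*(norm (G1 (fst z)))^2"
      by (rule amgm[OF e]) auto
    then have "ennreal (norm (F (fst z - snd z)) * norm (G1 (fst z)) * norm (G2 (snd z)))
      \<le> ennreal (e/2*((norm (F (fst z - snd z)))^2*(norm (G2 (snd z)))^2) + 1/(2*e)*(norm (G1 (fst z)))^2)"
      by (rule ennreal_leI)
    also have "\<dots> = ennreal (e/2) * T1 z + ennreal (1/(2*e)) * T2 z"
      using True e by (simp add: T1_def T2_def ennreal_mult[symmetric] ennreal_plus[symmetric] del: ennreal_plus)
    finally show ?thesis .
  qed
  have "JJ F G1 G2 \<le> (\<integral>\<^sup>+z. ennreal (e/2) * T1 z + ennreal (1/(2*e)) * T2 z \<partial>(lborel \<Otimes>\<^sub>M lborel))"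
    unfolding JJ_def by (rule nn_integral_mono) (rule pw)
  also have "\<dots> = ennreal (e/2) * integral\<^sup>N (lborel \<Otimes>\<^sub>M lborel) T1 + ennreal (1/(2*e)) * integral\<^sup>N (lborel \<Otimes>\<^sub>M lborel) T2"
    by (simp add: nn_integral_add nn_integral_cmult)
  also have "integral\<^sup>N (lborel \<Otimes>\<^sub>M lborel) T1 = 1"
  proof -
    have "integral\<^sup>N (lborel \<Otimes>\<^sub>M lborel) T1 = (\<integral>\<^sup>+\<zeta>2. \<integral>\<^sup>+\<zeta>1. T1 (\<zeta>1, \<zeta>2) \<partial>lborel \<partial>lborel)"
      by (rule lborel_pair.nn_integral_snd[symmetric]) measurable
    also have "\<dots> = (\<integral>\<^sup>+\<zeta>2. (\<integral>\<^sup>+\<zeta>1. ennreal ((norm (F (\<zeta>1 - \<zeta>2)))^2) \<partial>lborel) * ennreal ((norm (G2 \<zeta>2))^2) \<partial>lborel)"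
      by (simp add: T1_def ennreal_mult nn_integral_multc)
    also have "\<dots> = (\<integral>\<^sup>+\<zeta>2. ennreal ((norm (G2 \<zeta>2))^2) \<partial>lborel)"
      by (simp add: nn_integral_translate[where h="\<lambda>x. ennreal ((norm (F x))^2)"] nF)
    finally show ?thesis using n2 by simp
  qed
  also have "integral\<^sup>N (lborel \<Otimes>\<^sub>M lborel) T2 \<le> ennreal K"
  proof -
    have "integral\<^sup>N (lborel \<Otimes>\<^sub>M lborel) T2 = (\<integral>\<^sup>+\<zeta>1. \<integral>\<^sup>+\<zeta>2. T2 (\<zeta>1, \<zeta>2) \<partial>lborel \<partial>lborel)"
      by (rule lborel.nn_integral_fst[symmetric]) measurable
    also have "\<dots> = (\<integral>\<^sup>+\<zeta>1. ennreal ((norm (G1 \<zeta>1))^2) * emeasure lborel {\<zeta>2. \<zeta>2 \<in> S2 \<and> \<zeta>1 - \<zeta>2 \<in> SF} \<partial>lborel)"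
    proof (rule nn_integral_cong)
      fix \<zeta>1 :: pt
      have "(\<integral>\<^sup>+\<zeta>2. T2 (\<zeta>1, \<zeta>2) \<partial>lborel) = (\<integral>\<^sup>+\<zeta>2. ennreal ((norm (G1 \<zeta>1))^2) * indicator {\<zeta>2. \<zeta>2 \<in> S2 \<and> \<zeta>1 - \<zeta>2 \<in> SF} \<zeta>2 \<partial>lborel)"
        by (rule nn_integral_cong) (simp add: T2_def split: split_indicator)
      also have "\<dots> = ennreal ((norm (G1 \<zeta>1))^2) * emeasure lborel {\<zeta>2. \<zeta>2 \<in> S2 \<and> \<zeta>1 - \<zeta>2 \<in> SF}"
        by (rule nn_integral_cmult_indicator) measurable
      finally show "(\<integral>\<^sup>+\<zeta>2. T2 (\<zeta>1, \<zeta>2) \<partial>lborel) = ennreal ((norm (G1 \<zeta>1))^2) * emeasure lborel {\<zeta>2. \<zeta>2 \<in> S2 \<and> \<zeta>1 - \<zeta>2 \<in> SF}" .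
    qed
    also have "\<dots> \<le> (\<integral>\<^sup>+\<zeta>1. ennreal ((norm (G1 \<zeta>1))^2) * ennreal K \<partial>lborel)"
    proof (rule nn_integral_mono)
      fix \<zeta>1 :: pt
      show "ennreal ((norm (G1 \<zeta>1))^2) * emeasure lborel {\<zeta>2. \<zeta>2 \<in> S2 \<and> \<zeta>1 - \<zeta>2 \<in> SF} \<le> ennreal ((norm (G1 \<zeta>1))^2) * ennreal K"
      proof (cases "G1 \<zeta>1 = 0")
        case True then show ?thesis by simp
      next
        case False
        then have "\<zeta>1 \<in> S1" by (rule s1)
        then show ?thesis using fib by (intro mult_left_mono) auto
      qed
    qed
    also have "\<dots> = ennreal K" by (simp add: nn_integral_multc n1)
    finally show ?thesis .
  qed
  finally have "JJ F G1 G2 \<le> ennreal (e/2) * 1 + ennreal (1/(2*e)) * ennreal K"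
    by (simp add: mult_left_mono add_left_mono)
  then show ?thesis using ennreal_sqrt_split[OF K] by (simp add: e_def)
qed

lemma cs_a:
  assumes gF: "good F SF" and g1: "good G1 S1" and g2: "good G2 S2" and K: "0 < K"
    and fib: "\<forall>\<zeta>\<in>SF. emeasure lborel {\<zeta>2. \<zeta>2 \<in> S2 \<and> \<zeta> + \<zeta>2 \<in> S1} \<le> ennreal K"
  shows "JJ F G1 G2 \<le> ennreal (sqrt K)"
proof -
  have [measurable]: "F \<in> borel_measurable borel" "G1 \<in> borel_measurable borel" "G2 \<in> borel_measurable borel"
    "SF \<in> sets borel" "S1 \<in> sets borel" "S2 \<in> sets borel"
    using gF g1 g2 by (auto simp: good_def)
  have nF: "(\<integral>\<^sup>+z. ennreal ((norm (F z))^2) \<partial>lborel) = 1"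
   and n1: "(\<integral>\<^sup>+z. ennreal ((norm (G1 z))^2) \<partial>lborel) = 1"
   and n2: "(\<integral>\<^sup>+z. ennreal ((norm (G2 z))^2) \<partial>lborel) = 1"
    using gF g1 g2 by (auto simp: good_def)
  have sF: "\<And>z. F z \<noteq> 0 \<Longrightarrow> z \<in> SF" and s1: "\<And>z. G1 z \<noteq> 0 \<Longrightarrow> z \<in> S1" and s2: "\<And>z. G2 z \<noteq> 0 \<Longrightarrow> z \<in> S2"
    using gF g1 g2 by (auto simp: good_def)
  define e where "e = sqrt K"
  have e: "0 < e" using K by (simp add: e_def)
  define T1 where "T1 = (\<lambda>z::pt\<times>pt. ennreal ((norm (G1 (fst z)))^2 * (norm (G2 (snd z)))^2))"
  define T2 where "T2 = (\<lambda>z::pt\<times>pt. ennreal ((norm (F (fst z - snd z)))^2) * indicator S1 (fst z) * indicator S2 (snd z))"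
  have [measurable]: "T1 \<in> borel_measurable (lborel \<Otimes>\<^sub>M lborel)" "T2 \<in> borel_measurable (lborel \<Otimes>\<^sub>M lborel)"
    unfolding T1_def T2_def by measurable
  have pw: "ennreal (norm (F (fst z - snd z)) * norm (G1 (fst z)) * norm (G2 (snd z)))
     \<le> ennreal (e/2) * T1 z + ennreal (1/(2*e)) * T2 z" for z
  proof (cases "fst z \<in> S1 \<and> snd z \<in> S2")
    case False
    then have "G1 (fst z) = 0 \<or> G2 (snd z) = 0" using s1 s2 by blast
    then show ?thesis by auto
  next
    case True
    have "norm (G1 (fst z)) * norm (F (fst z - snd z)) * norm (G2 (snd z))
      \<le> e/2*((norm (G1 (fst z)))^2*(norm (G2 (snd z)))^2) + 1/(2*e)*(norm (F (fst z - snd z)))^2"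
      by (rule amgm[OF e]) auto
    then have "ennreal (norm (F (fst z - snd z)) * norm (G1 (fst z)) * norm (G2 (snd z)))
      \<le> ennreal (e/2*((norm (G1 (fst z)))^2*(norm (G2 (snd z)))^2) + 1/(2*e)*(norm (F (fst z - snd z)))^2)"
      by (intro ennreal_leI) (simp add: algebra_simps)
    also have "\<dots> = ennreal (e/2) * T1 z + ennreal (1/(2*e)) * T2 z"
      using True e by (simp add: T1_def T2_def ennreal_mult[symmetric] ennreal_plus[symmetric] del: ennreal_plus)
    finally show ?thesis .
  qed
  have "JJ F G1 G2 \<le> (\<integral>\<^sup>+z. ennreal (e/2) * T1 z + ennreal (1/(2*e)) * T2 z \<partial>(lborel \<Otimes>\<^sub>M lborel))"
    unfolding JJ_def by (rule nn_integral_mono) (rule pw)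
  also have "\<dots> = ennreal (e/2) * integral\<^sup>N (lborel \<Otimes>\<^sub>M lborel) T1 + ennreal (1/(2*e)) * integral\<^sup>N (lborel \<Otimes>\<^sub>M lborel) T2"
    by (simp add: nn_integral_add nn_integral_cmult)
  also have "integral\<^sup>N (lborel \<Otimes>\<^sub>M lborel) T1 = 1"
  proof -
    have "integral\<^sup>N (lborel \<Otimes>\<^sub>M lborel) T1 = (\<integral>\<^sup>+\<zeta>2. \<integral>\<^sup>+\<zeta>1. T1 (\<zeta>1, \<zeta>2) \<partial>lborel \<partial>lborel)"
      by (rule lborel_pair.nn_integral_snd[symmetric]) measurable
    also have "\<dots> = (\<integral>\<^sup>+\<zeta>2. (\<integral>\<^sup>+\<zeta>1. ennreal ((norm (G1 \<zeta>1))^2) \<partial>lborel) * ennreal ((norm (G2 \<zeta>2))^2) \<partial>lborel)"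
      by (simp add: T1_def ennreal_mult nn_integral_multc)
    also have "\<dots> = (\<integral>\<^sup>+\<zeta>2. ennreal ((norm (G2 \<zeta>2))^2) \<partial>lborel)"
      by (simp add: n1)
    finally show ?thesis using n2 by simp
  qed
  also have "integral\<^sup>N (lborel \<Otimes>\<^sub>M lborel) T2 \<le> ennreal K"
  proof -
    define f where "f = (\<lambda>(x::pt, y::pt). ennreal ((norm (F x))^2) * indicator S1 (x + y) * indicator S2 y)"
    have [measurable]: "f \<in> borel_measurable (lborel \<Otimes>\<^sub>M lborel)" unfolding f_def by measurable
    have "integral\<^sup>N (lborel \<Otimes>\<^sub>M lborel) T2 = (\<integral>\<^sup>+\<zeta>2. \<integral>\<^sup>+\<zeta>1. T2 (\<zeta>1, \<zeta>2) \<partial>lborel \<partial>lborel)"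
      by (rule lborel_pair.nn_integral_snd[symmetric]) measurable
    also have "\<dots> = (\<integral>\<^sup>+\<zeta>2. \<integral>\<^sup>+\<zeta>1. (\<lambda>x. f (x, \<zeta>2)) (\<zeta>1 - \<zeta>2) \<partial>lborel \<partial>lborel)"
      by (simp add: T2_def f_def)
    also have "\<dots> = (\<integral>\<^sup>+\<zeta>2. \<integral>\<^sup>+x. f (x, \<zeta>2) \<partial>lborel \<partial>lborel)"
      by (subst nn_integral_translate) (auto simp: f_def)
    also have "\<dots> = (\<integral>\<^sup>+x. \<integral>\<^sup>+\<zeta>2. f (x, \<zeta>2) \<partial>lborel \<partial>lborel)"
      by (rule lborel_pair.Fubini) measurable
    also have "\<dots> = (\<integral>\<^sup>+x. ennreal ((norm (F x))^2) * emeasure lborel {\<zeta>2. \<zeta>2 \<in> S2 \<and> x + \<zeta>2 \<in> S1} \<partial>lborel)"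
    proof (rule nn_integral_cong)
      fix x :: pt
      have "(\<integral>\<^sup>+\<zeta>2. f (x, \<zeta>2) \<partial>lborel) = (\<integral>\<^sup>+\<zeta>2. ennreal ((norm (F x))^2) * indicator {\<zeta>2. \<zeta>2 \<in> S2 \<and> x + \<zeta>2 \<in> S1} \<zeta>2 \<partial>lborel)"
        by (rule nn_integral_cong) (simp add: f_def split: split_indicator)
      also have "\<dots> = ennreal ((norm (F x))^2) * emeasure lborel {\<zeta>2. \<zeta>2 \<in> S2 \<and> x + \<zeta>2 \<in> S1}"
        by (rule nn_integral_cmult_indicator) measurable
      finally show "(\<integral>\<^sup>+\<zeta>2. f (x, \<zeta>2) \<partial>lborel) = ennreal ((norm (F x))^2) * emeasure lborel {\<zeta>2. \<zeta>2 \<in> S2 \<and> x + \<zeta>2 \<in> S1}" .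
    qed
    also have "\<dots> \<le> (\<integral>\<^sup>+x. ennreal ((norm (F x))^2) * ennreal K \<partial>lborel)"
    proof (rule nn_integral_mono)
      fix x :: pt
      show "ennreal ((norm (F x))^2) * emeasure lborel {\<zeta>2. \<zeta>2 \<in> S2 \<and> x + \<zeta>2 \<in> S1} \<le> ennreal ((norm (F x))^2) * ennreal K"
      proof (cases "F x = 0")
        case True then show ?thesis by simp
      next
        case False
        then have "x \<in> SF" by (rule sF)
        then show ?thesis using fib by (intro mult_left_mono) auto
      qed
    qed
    also have "\<dots> = ennreal K" by (simp add: nn_integral_multc nF)
    finally show ?thesis .
  qed
  finally have "JJ F G1 G2 \<le> ennreal (e/2) * 1 + ennreal (1/(2*e)) * ennreal K"
    by (simp add: mult_left_mono add_left_mono)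
  then show ?thesis using ennreal_sqrt_split[OF K] by (simp add: e_def)
qed

lemma cs_c:
  assumes gF: "good F SF" and g1: "good G1 S1" and g2: "good G2 S2" and K: "0 < K"
    and fib: "\<forall>\<zeta>2\<in>S2. emeasure lborel {\<zeta>1. \<zeta>1 \<in> S1 \<and> \<zeta>1 - \<zeta>2 \<in> SF} \<le> ennreal K"
  shows "JJ F G1 G2 \<le> ennreal (sqrt K)"
proof -
  have [measurable]: "F \<in> borel_measurable borel" "G1 \<in> borel_measurable borel" "G2 \<in> borel_measurable borel"
    "SF \<in> sets borel" "S1 \<in> sets borel" "S2 \<in> sets borel"
    using gF g1 g2 by (auto simp: good_def)
  have nF: "(\<integral>\<^sup>+z. ennreal ((norm (F z))^2) \<partial>lborel) = 1"
   and n1: "(\<integral>\<^sup>+z. ennreal ((norm (G1 z))^2) \<partial>lborel) = 1"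
   and n2: "(\<integral>\<^sup>+z. ennreal ((norm (G2 z))^2) \<partial>lborel) = 1"
    using gF g1 g2 by (auto simp: good_def)
  have sF: "\<And>z. F z \<noteq> 0 \<Longrightarrow> z \<in> SF" and s1: "\<And>z. G1 z \<noteq> 0 \<Longrightarrow> z \<in> S1" and s2: "\<And>z. G2 z \<noteq> 0 \<Longrightarrow> z \<in> S2"
    using gF g1 g2 by (auto simp: good_def)
  define e where "e = sqrt K"
  have e: "0 < e" using K by (simp add: e_def)
  define T1 where "T1 = (\<lambda>z::pt\<times>pt. ennreal ((norm (F (fst z - snd z)))^2 * (norm (G1 (fst z)))^2))"
  define T2 where "T2 = (\<lambda>z::pt\<times>pt. ennreal ((norm (G2 (snd z)))^2) * indicator S1 (fst z) * indicator SF (fst z - snd z))"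
  have [measurable]: "T1 \<in> borel_measurable (lborel \<Otimes>\<^sub>M lborel)" "T2 \<in> borel_measurable (lborel \<Otimes>\<^sub>M lborel)"
    unfolding T1_def T2_def by measurable
  have pw: "ennreal (norm (F (fst z - snd z)) * norm (G1 (fst z)) * norm (G2 (snd z)))
     \<le> ennreal (e/2) * T1 z + ennreal (1/(2*e)) * T2 z" for z
  proof (cases "fst z \<in> S1 \<and> fst z - snd z \<in> SF")
    case False
    then have "G1 (fst z) = 0 \<or> F (fst z - snd z) = 0" using s1 sF by blast
    then show ?thesis by auto
  next
    case True
    have "norm (F (fst z - snd z)) * norm (G2 (snd z)) * norm (G1 (fst z))
      \<le> e/2*((norm (F (fst z - snd z)))^2*(norm (G1 (fst z)))^2) + 1/(2*e)*(norm (G2 (snd z)))^2"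
      by (rule amgm[OF e]) auto
    then have "ennreal (norm (F (fst z - snd z)) * norm (G1 (fst z)) * norm (G2 (snd z)))
      \<le> ennreal (e/2*((norm (F (fst z - snd z)))^2*(norm (G1 (fst z)))^2) + 1/(2*e)*(norm (G2 (snd z)))^2)"
      by (intro ennreal_leI) (simp add: algebra_simps)
    also have "\<dots> = ennreal (e/2) * T1 z + ennreal (1/(2*e)) * T2 z"
      using True e by (simp add: T1_def T2_def ennreal_mult[symmetric] ennreal_plus[symmetric] del: ennreal_plus)
    finally show ?thesis .
  qed
  have "JJ F G1 G2 \<le> (\<integral>\<^sup>+z. ennreal (e/2) * T1 z + ennreal (1/(2*e)) * T2 z \<partial>(lborel \<Otimes>\<^sub>M lborel))"
    unfolding JJ_def by (rule nn_integral_mono) (rule pw)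
  also have "\<dots> = ennreal (e/2) * integral\<^sup>N (lborel \<Otimes>\<^sub>M lborel) T1 + ennreal (1/(2*e)) * integral\<^sup>N (lborel \<Otimes>\<^sub>M lborel) T2"
    by (simp add: nn_integral_add nn_integral_cmult)
  also have "integral\<^sup>N (lborel \<Otimes>\<^sub>M lborel) T1 = 1"
  proof -
    have "integral\<^sup>N (lborel \<Otimes>\<^sub>M lborel) T1 = (\<integral>\<^sup>+\<zeta>1. \<integral>\<^sup>+\<zeta>2. T1 (\<zeta>1, \<zeta>2) \<partial>lborel \<partial>lborel)"
      by (rule lborel.nn_integral_fst[symmetric]) measurable
    also have "\<dots> = (\<integral>\<^sup>+\<zeta>1. (\<integral>\<^sup>+\<zeta>2. ennreal ((norm (F (\<zeta>1 - \<zeta>2)))^2) \<partial>lborel) * ennreal ((norm (G1 \<zeta>1))^2) \<partial>lborel)"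
      by (simp add: T1_def ennreal_mult nn_integral_multc)
    also have "\<dots> = (\<integral>\<^sup>+\<zeta>1. ennreal ((norm (G1 \<zeta>1))^2) \<partial>lborel)"
      by (simp add: nn_integral_reflect[where h="\<lambda>x. ennreal ((norm (F x))^2)"] nF)
    finally show ?thesis using n1 by simp
  qed
  also have "integral\<^sup>N (lborel \<Otimes>\<^sub>M lborel) T2 \<le> ennreal K"
  proof -
    have "integral\<^sup>N (lborel \<Otimes>\<^sub>M lborel) T2 = (\<integral>\<^sup>+\<zeta>2. \<integral>\<^sup>+\<zeta>1. T2 (\<zeta>1, \<zeta>2) \<partial>lborel \<partial>lborel)"
      by (rule lborel_pair.nn_integral_snd[symmetric]) measurable
    also have "\<dots> = (\<integral>\<^sup>+\<zeta>2. ennreal ((norm (G2 \<zeta>2))^2) * emeasure lborel {\<zeta>1. \<zeta>1 \<in> S1 \<and> \<zeta>1 - \<zeta>2 \<in> SF} \<partial>lborel)"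
    proof (rule nn_integral_cong)
      fix \<zeta>2 :: pt
      have "(\<integral>\<^sup>+\<zeta>1. T2 (\<zeta>1, \<zeta>2) \<partial>lborel) = (\<integral>\<^sup>+\<zeta>1. ennreal ((norm (G2 \<zeta>2))^2) * indicator {\<zeta>1. \<zeta>1 \<in> S1 \<and> \<zeta>1 - \<zeta>2 \<in> SF} \<zeta>1 \<partial>lborel)"
        by (rule nn_integral_cong) (simp add: T2_def split: split_indicator)
      also have "\<dots> = ennreal ((norm (G2 \<zeta>2))^2) * emeasure lborel {\<zeta>1. \<zeta>1 \<in> S1 \<and> \<zeta>1 - \<zeta>2 \<in> SF}"
        by (rule nn_integral_cmult_indicator) measurable
      finally show "(\<integral>\<^sup>+\<zeta>1. T2 (\<zeta>1, \<zeta>2) \<partial>lborel) = ennreal ((norm (G2 \<zeta>2))^2) * emeasure lborel {\<zeta>1. \<zeta>1 \<in> S1 \<and> \<zeta>1 - \<zeta>2 \<in> SF}" .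
    qed
    also have "\<dots> \<le> (\<integral>\<^sup>+\<zeta>2. ennreal ((norm (G2 \<zeta>2))^2) * ennreal K \<partial>lborel)"
    proof (rule nn_integral_mono)
      fix \<zeta>2 :: pt
      show "ennreal ((norm (G2 \<zeta>2))^2) * emeasure lborel {\<zeta>1. \<zeta>1 \<in> S1 \<and> \<zeta>1 - \<zeta>2 \<in> SF} \<le> ennreal ((norm (G2 \<zeta>2))^2) * ennreal K"
      proof (cases "G2 \<zeta>2 = 0")
        case True then show ?thesis by simp
      next
        case False
        then have "\<zeta>2 \<in> S2" by (rule s2)
        then show ?thesis using fib by (intro mult_left_mono) auto
      qed
    qed
    also have "\<dots> = ennreal K" by (simp add: nn_integral_multc n2)
    finally show ?thesis .
  qed
  finally have "JJ F G1 G2 \<le> ennreal (e/2) * 1 + ennreal (1/(2*e)) * ennreal K"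
    by (simp add: mult_left_mono add_left_mono)
  then show ?thesis using ennreal_sqrt_split[OF K] by (simp add: e_def)
qed




definition DD :: "real \<Rightarrow> (real^2) set" where
  "DD N = {\<xi>. norm \<xi> \<le> 2*N \<and> (2 \<le> N \<longrightarrow> N/2 \<le> norm \<xi>)}"

definition SFs :: "real \<Rightarrow> real \<Rightarrow> real \<Rightarrow> pt set" where
  "SFs N s L = {z. fst z \<in> DD N \<and> \<bar>snd z + s * norm (fst z)\<bar> \<le> 2*L}"

definition SSs :: "real \<Rightarrow> real \<Rightarrow> pt set" where
  "SSs N L = {z. fst z \<in> DD N \<and> \<bar>snd z + (norm (fst z))^2\<bar> \<le> 2*L}"

lemma DD_meas[measurable]: "DD N \<in> sets borel"
  unfolding DD_def by measurable

lemma SFs_meas[measurable]: "SFs N s L \<in> sets borel"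
proof -
  have "{z \<in> space (lborel \<Otimes>\<^sub>M lborel). fst z \<in> DD N \<and> \<bar>snd z + s * norm (fst z)\<bar> \<le> 2*L} \<in> sets (lborel \<Otimes>\<^sub>M lborel)"
    by measurable
  then have "SFs N s L \<in> sets (lborel \<Otimes>\<^sub>M lborel)" unfolding SFs_def space_pair_measure by simp
  then show ?thesis by (simp only: lborel_prod sets_lborel)
qed

lemma SSs_meas[measurable]: "SSs N L \<in> sets borel"
proof -
  have "{z \<in> space (lborel \<Otimes>\<^sub>M lborel). fst z \<in> DD N \<and> \<bar>snd z + (norm (fst z))^2\<bar> \<le> 2*L} \<in> sets (lborel \<Otimes>\<^sub>M lborel)"
    by measurable
  then have "SSs N L \<in> sets (lborel \<Otimes>\<^sub>M lborel)" unfolding SSs_def space_pair_measure by simp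
  then show ?thesis by (simp only: lborel_prod sets_lborel)
qed

lemma E_meas:
  fixes A :: "(real^2) set" and \<alpha> \<beta> :: "real^2 \<Rightarrow> real"
  assumes [measurable]: "A \<in> sets borel" "\<alpha> \<in> borel_measurable borel" "\<beta> \<in> borel_measurable borel"
  shows "{z::pt. fst z \<in> A \<and> \<bar>snd z + \<alpha> (fst z)\<bar> \<le> w1 \<and> \<bar>snd z + \<beta> (fst z)\<bar> \<le> w2} \<in> sets lborel"
proof -
  have "{z \<in> space (lborel \<Otimes>\<^sub>M lborel). fst z \<in> A \<and> \<bar>snd z + \<alpha> (fst z)\<bar> \<le> w1 \<and> \<bar>snd z + \<beta> (fst z)\<bar> \<le> w2} \<in> sets (lborel \<Otimes>\<^sub>M lborel)"
    by measurable
  then have "{z::pt. fst z \<in> A \<and> \<bar>snd z + \<alpha> (fst z)\<bar> \<le> w1 \<and> \<bar>snd z + \<beta> (fst z)\<bar> \<le> w2} \<in> sets (lborel \<Otimes>\<^sub>M lborel)"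
    unfolding space_pair_measure by simp
  then show ?thesis by (simp only: lborel_prod)
qed

lemma ennreal_mono_mult_min:
  assumes "0 \<le> a" "x \<le> ennreal b1" "x \<le> ennreal b2"
  shows "ennreal a * x \<le> ennreal (a * min b1 b2)"
proof -
  have "x \<le> ennreal (min b1 b2)" using assms by (cases "b1 \<le> b2") (auto simp: min_def)
  then have "ennreal a * x \<le> ennreal a * ennreal (min b1 b2)" by (rule mult_left_mono) simp
  also have "\<dots> = ennreal (a * min b1 b2)" using assms by (simp add: ennreal_mult')
  finally show ?thesis .
qed

lemma fiber_b:
  assumes N2: "1 \<le> N2" and L: "1 \<le> L" "1 \<le> L2" and s: "\<bar>s\<bar> \<le> 1"
  shows "emeasure lborel {\<zeta>2. \<zeta>2 \<in> SSs N2 L2 \<and> \<zeta>1 - \<zeta>2 \<in> SFs N s L}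
     \<le> ennreal (4*min L2 L * min (32*N2^2) (4096*(L2+L)))"
proof -
  obtain \<xi>1 \<tau>1 where z1: "\<zeta>1 = (\<xi>1, \<tau>1)" by (cases \<zeta>1)
  define \<beta> where "\<beta> = (\<lambda>\<xi>::real^2. - \<tau>1 - s * norm (\<xi>1 - \<xi>))"
  have [measurable]: "\<beta> \<in> borel_measurable borel" unfolding \<beta>_def by measurable
  have "{\<zeta>2. \<zeta>2 \<in> SSs N2 L2 \<and> \<zeta>1 - \<zeta>2 \<in> SFs N s L} \<subseteq>
     {z::pt. fst z \<in> DD N2 \<and> \<bar>snd z + (\<lambda>\<xi>. (norm \<xi>)^2) (fst z)\<bar> \<le> 2*L2 \<and> \<bar>snd z + \<beta> (fst z)\<bar> \<le> 2*L}"
  proof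
    fix z assume "z \<in> {\<zeta>2. \<zeta>2 \<in> SSs N2 L2 \<and> \<zeta>1 - \<zeta>2 \<in> SFs N s L}"
    then have A: "z \<in> SSs N2 L2" "\<zeta>1 - z \<in> SFs N s L" by auto
    obtain \<xi>2 \<tau>2 where z: "z = (\<xi>2, \<tau>2)" by (cases z)
    from A have B: "\<xi>2 \<in> DD N2" "\<bar>\<tau>2 + (norm \<xi>2)^2\<bar> \<le> 2*L2" "\<bar>\<tau>1 - \<tau>2 + s * norm (\<xi>1 - \<xi>2)\<bar> \<le> 2*L"
      unfolding z z1 by (auto simp: SSs_def SFs_def)
    have "\<tau>2 + \<beta> \<xi>2 = - (\<tau>1 - \<tau>2 + s * norm (\<xi>1 - \<xi>2))" by (simp add: \<beta>_def)
    then have "\<bar>\<tau>2 + \<beta> \<xi>2\<bar> \<le> 2*L" using B(3) by simp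
    with B show "z \<in> {z::pt. fst z \<in> DD N2 \<and> \<bar>snd z + (\<lambda>\<xi>. (norm \<xi>)^2) (fst z)\<bar> \<le> 2*L2 \<and> \<bar>snd z + \<beta> (fst z)\<bar> \<le> 2*L}"
      unfolding z by simp
  qed
  then have "emeasure lborel {\<zeta>2. \<zeta>2 \<in> SSs N2 L2 \<and> \<zeta>1 - \<zeta>2 \<in> SFs N s L}
     \<le> emeasure lborel {z::pt. fst z \<in> DD N2 \<and> \<bar>snd z + (\<lambda>\<xi>. (norm \<xi>)^2) (fst z)\<bar> \<le> 2*L2 \<and> \<bar>snd z + \<beta> (fst z)\<bar> \<le> 2*L}"
    by (intro emeasure_mono E_meas) measurable
  also have "\<dots> \<le> ennreal (2*min (2*L2) (2*L)) * emeasure lborel (DD N2 \<inter> {\<xi>. \<bar>(\<lambda>\<xi>. (norm \<xi>)^2) \<xi> - \<beta> \<xi>\<bar> \<le> 2*L2 + 2*L})"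
    by (rule fiber_bound[where \<alpha>="\<lambda>\<xi>. (norm \<xi>)^2" and \<beta>=\<beta>]) (use L in auto)
  also have "\<dots> \<le> ennreal (2*min (2*L2) (2*L) * min (32*N2^2) (4096*(L2+L)))"
  proof (rule ennreal_mono_mult_min)
    have sm: "DD N2 \<inter> {\<xi>. \<bar>(\<lambda>\<xi>. (norm \<xi>)^2) \<xi> - \<beta> \<xi>\<bar> \<le> 2*L2 + 2*L} \<in> sets borel" by measurable
    show "emeasure lborel (DD N2 \<inter> {\<xi>. \<bar>(\<lambda>\<xi>. (norm \<xi>)^2) \<xi> - \<beta> \<xi>\<bar> \<le> 2*L2 + 2*L}) \<le> ennreal (32*N2^2)"
    proof -
      have "emeasure lborel (DD N2 \<inter> {\<xi>. \<bar>(\<lambda>\<xi>. (norm \<xi>)^2) \<xi> - \<beta> \<xi>\<bar> \<le> 2*L2 + 2*L}) \<le> ennreal (8*(2*N2)^2)"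
        by (rule ball_area[OF sm, of 0]) (use N2 in \<open>auto simp: DD_def\<close>)
      then show ?thesis by (simp add: power2_eq_square)
    qed
    have "DD N2 \<inter> {\<xi>. \<bar>(\<lambda>\<xi>. (norm \<xi>)^2) \<xi> - \<beta> \<xi>\<bar> \<le> 2*L2 + 2*L} =
      {\<xi>::real^2. norm \<xi> \<le> 2*N2 \<and> (2 \<le> N2 \<longrightarrow> N2/2 \<le> norm \<xi>) \<and> \<bar>norm \<xi>^2 + s*norm(\<xi> - \<xi>1) - (-\<tau>1)\<bar> \<le> 2*L2 + 2*L}"
      by (auto simp: DD_def \<beta>_def norm_minus_commute algebra_simps)
    also have "emeasure lborel \<dots> \<le> ennreal (2048*(2*L2 + 2*L))"
      by (rule sublevel_area) (use s N2 L in auto)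
    finally show "emeasure lborel (DD N2 \<inter> {\<xi>. \<bar>(\<lambda>\<xi>. (norm \<xi>)^2) \<xi> - \<beta> \<xi>\<bar> \<le> 2*L2 + 2*L}) \<le> ennreal (4096*(L2+L))"
      by (simp add: algebra_simps)
  qed (use L in auto)
  also have "2*min (2*L2) (2*L) = 4 * min L2 L" by (simp add: min_def)
  finally show ?thesis by simp
qed

lemma fiber_c:
  assumes N1: "1 \<le> N1" and L: "1 \<le> L" "1 \<le> L1" and s: "\<bar>s\<bar> \<le> 1"
  shows "emeasure lborel {\<zeta>1. \<zeta>1 \<in> SSs N1 L1 \<and> \<zeta>1 - \<zeta>2 \<in> SFs N s L}
     \<le> ennreal (4*min L1 L * min (32*N1^2) (4096*(L1+L)))"
proof -
  obtain \<xi>2 \<tau>2 where z2: "\<zeta>2 = (\<xi>2, \<tau>2)" by (cases \<zeta>2)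
  define \<beta> where "\<beta> = (\<lambda>\<xi>::real^2. - \<tau>2 + s * norm (\<xi> - \<xi>2))"
  have [measurable]: "\<beta> \<in> borel_measurable borel" unfolding \<beta>_def by measurable
  have "{\<zeta>1. \<zeta>1 \<in> SSs N1 L1 \<and> \<zeta>1 - \<zeta>2 \<in> SFs N s L} \<subseteq>
     {z::pt. fst z \<in> DD N1 \<and> \<bar>snd z + (\<lambda>\<xi>. (norm \<xi>)^2) (fst z)\<bar> \<le> 2*L1 \<and> \<bar>snd z + \<beta> (fst z)\<bar> \<le> 2*L}"
  proof
    fix z assume "z \<in> {\<zeta>1. \<zeta>1 \<in> SSs N1 L1 \<and> \<zeta>1 - \<zeta>2 \<in> SFs N s L}"
    then have A: "z \<in> SSs N1 L1" "z - \<zeta>2 \<in> SFs N s L" by auto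
    obtain \<xi>1 \<tau>1 where z: "z = (\<xi>1, \<tau>1)" by (cases z)
    from A have B: "\<xi>1 \<in> DD N1" "\<bar>\<tau>1 + (norm \<xi>1)^2\<bar> \<le> 2*L1" "\<bar>\<tau>1 - \<tau>2 + s * norm (\<xi>1 - \<xi>2)\<bar> \<le> 2*L"
      unfolding z z2 by (auto simp: SSs_def SFs_def)
    have "\<tau>1 + \<beta> \<xi>1 = \<tau>1 - \<tau>2 + s * norm (\<xi>1 - \<xi>2)" by (simp add: \<beta>_def)
    then have "\<bar>\<tau>1 + \<beta> \<xi>1\<bar> \<le> 2*L" using B(3) by simp
    with B show "z \<in> {z::pt. fst z \<in> DD N1 \<and> \<bar>snd z + (\<lambda>\<xi>. (norm \<xi>)^2) (fst z)\<bar> \<le> 2*L1 \<and> \<bar>snd z + \<beta> (fst z)\<bar> \<le> 2*L}"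
      unfolding z by simp
  qed
  then have "emeasure lborel {\<zeta>1. \<zeta>1 \<in> SSs N1 L1 \<and> \<zeta>1 - \<zeta>2 \<in> SFs N s L}
     \<le> emeasure lborel {z::pt. fst z \<in> DD N1 \<and> \<bar>snd z + (\<lambda>\<xi>. (norm \<xi>)^2) (fst z)\<bar> \<le> 2*L1 \<and> \<bar>snd z + \<beta> (fst z)\<bar> \<le> 2*L}"
    by (intro emeasure_mono E_meas) measurable
  also have "\<dots> \<le> ennreal (2*min (2*L1) (2*L)) * emeasure lborel (DD N1 \<inter> {\<xi>. \<bar>(\<lambda>\<xi>. (norm \<xi>)^2) \<xi> - \<beta> \<xi>\<bar> \<le> 2*L1 + 2*L})"
    by (rule fiber_bound[where \<alpha>="\<lambda>\<xi>. (norm \<xi>)^2" and \<beta>=\<beta>]) (use L in auto)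
  also have "\<dots> \<le> ennreal (2*min (2*L1) (2*L) * min (32*N1^2) (4096*(L1+L)))"
  proof (rule ennreal_mono_mult_min)
    have sm: "DD N1 \<inter> {\<xi>. \<bar>(\<lambda>\<xi>. (norm \<xi>)^2) \<xi> - \<beta> \<xi>\<bar> \<le> 2*L1 + 2*L} \<in> sets borel" by measurable
    show "emeasure lborel (DD N1 \<inter> {\<xi>. \<bar>(\<lambda>\<xi>. (norm \<xi>)^2) \<xi> - \<beta> \<xi>\<bar> \<le> 2*L1 + 2*L}) \<le> ennreal (32*N1^2)"
    proof -
      have "emeasure lborel (DD N1 \<inter> {\<xi>. \<bar>(\<lambda>\<xi>. (norm \<xi>)^2) \<xi> - \<beta> \<xi>\<bar> \<le> 2*L1 + 2*L}) \<le> ennreal (8*(2*N1)^2)"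
        by (rule ball_area[OF sm, of 0]) (use N1 in \<open>auto simp: DD_def\<close>)
      then show ?thesis by (simp add: power2_eq_square)
    qed
    have "DD N1 \<inter> {\<xi>. \<bar>(\<lambda>\<xi>. (norm \<xi>)^2) \<xi> - \<beta> \<xi>\<bar> \<le> 2*L1 + 2*L} =
      {\<xi>::real^2. norm \<xi> \<le> 2*N1 \<and> (2 \<le> N1 \<longrightarrow> N1/2 \<le> norm \<xi>) \<and> \<bar>norm \<xi>^2 + (-s)*norm(\<xi> - \<xi>2) - (-\<tau>2)\<bar> \<le> 2*L1 + 2*L}"
      by (auto simp: DD_def \<beta>_def algebra_simps)
    also have "emeasure lborel \<dots> \<le> ennreal (2048*(2*L1 + 2*L))"
      by (rule sublevel_area) (use s N1 L in auto)
    finally show "emeasure lborel (DD N1 \<inter> {\<xi>. \<bar>(\<lambda>\<xi>. (norm \<xi>)^2) \<xi> - \<beta> \<xi>\<bar> \<le> 2*L1 + 2*L}) \<le> ennreal (4096*(L1+L))"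
      by (simp add: algebra_simps)
  qed (use L in auto)
  also have "2*min (2*L1) (2*L) = 4 * min L1 L" by (simp add: min_def)
  finally show ?thesis by simp
qed

lemma norm_add_sq: "(norm ((x::real^2) + y))^2 = (norm x)^2 + 2*(x \<bullet> y) + (norm y)^2"
  by (simp add: power2_norm_eq_inner inner_add_left inner_add_right inner_commute)

lemma fiber_a:
  assumes L: "1 \<le> L1" "1 \<le> L2" and m: "0 < m" and R: "0 \<le> R"
    and hm: "\<forall>\<xi>2\<in>DD N2. fst \<zeta> + \<xi>2 \<in> DD N1 \<longrightarrow> m \<le> norm (fst \<zeta>) \<and> norm (\<xi>2 - q) \<le> R"
  shows "emeasure lborel {\<zeta>2. \<zeta>2 \<in> SSs N2 L2 \<and> \<zeta> + \<zeta>2 \<in> SSs N1 L1}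
     \<le> ennreal (4*min L2 L1 * min (8*R^2) (16*R*(L2+L1)/m))"
proof -
  obtain \<xi> \<tau> where z: "\<zeta> = (\<xi>, \<tau>)" by (cases \<zeta>)
  define \<beta> where "\<beta> = (\<lambda>\<xi>2::real^2. \<tau> + (norm (\<xi> + \<xi>2))^2)"
  define A where "A = DD N2 \<inter> {\<xi>2. \<xi> + \<xi>2 \<in> DD N1}"
  have [measurable]: "\<beta> \<in> borel_measurable borel" "A \<in> sets borel" unfolding \<beta>_def A_def by measurable
  have "{\<zeta>2. \<zeta>2 \<in> SSs N2 L2 \<and> \<zeta> + \<zeta>2 \<in> SSs N1 L1} \<subseteq>
     {z::pt. fst z \<in> A \<and> \<bar>snd z + (\<lambda>\<xi>. (norm \<xi>)^2) (fst z)\<bar> \<le> 2*L2 \<and> \<bar>snd z + \<beta> (fst z)\<bar> \<le> 2*L1}"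
  proof
    fix z assume "z \<in> {\<zeta>2. \<zeta>2 \<in> SSs N2 L2 \<and> \<zeta> + \<zeta>2 \<in> SSs N1 L1}"
    then have A: "z \<in> SSs N2 L2" "\<zeta> + z \<in> SSs N1 L1" by auto
    obtain \<xi>2 \<tau>2 where z2: "z = (\<xi>2, \<tau>2)" by (cases z)
    from A have B: "\<xi>2 \<in> DD N2" "\<bar>\<tau>2 + (norm \<xi>2)^2\<bar> \<le> 2*L2" "\<xi> + \<xi>2 \<in> DD N1" "\<bar>\<tau> + \<tau>2 + (norm (\<xi> + \<xi>2))^2\<bar> \<le> 2*L1"
      unfolding z z2 by (auto simp: SSs_def)
    have "\<tau>2 + \<beta> \<xi>2 = \<tau> + \<tau>2 + (norm (\<xi> + \<xi>2))^2" by (simp add: \<beta>_def)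
    then have "\<bar>\<tau>2 + \<beta> \<xi>2\<bar> \<le> 2*L1" using B(4) by simp
    moreover have "\<xi>2 \<in> A" using B(1,3) by (auto simp: A_def DD_def)
    ultimately show "z \<in> {z::pt. fst z \<in> A \<and> \<bar>snd z + (\<lambda>\<xi>. (norm \<xi>)^2) (fst z)\<bar> \<le> 2*L2 \<and> \<bar>snd z + \<beta> (fst z)\<bar> \<le> 2*L1}"
      using B unfolding z2 by simp
  qed
  then have "emeasure lborel {\<zeta>2. \<zeta>2 \<in> SSs N2 L2 \<and> \<zeta> + \<zeta>2 \<in> SSs N1 L1}
     \<le> emeasure lborel {z::pt. fst z \<in> A \<and> \<bar>snd z + (\<lambda>\<xi>. (norm \<xi>)^2) (fst z)\<bar> \<le> 2*L2 \<and> \<bar>snd z + \<beta> (fst z)\<bar> \<le> 2*L1}"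
    by (intro emeasure_mono E_meas) measurable
  also have "\<dots> \<le> ennreal (2*min (2*L2) (2*L1)) * emeasure lborel (A \<inter> {\<xi>. \<bar>(\<lambda>\<xi>. (norm \<xi>)^2) \<xi> - \<beta> \<xi>\<bar> \<le> 2*L2 + 2*L1})"
    by (rule fiber_bound[where \<alpha>="\<lambda>\<xi>. (norm \<xi>)^2" and \<beta>=\<beta>]) (use L in auto)
  also have "\<dots> \<le> ennreal (2*min (2*L2) (2*L1) * min (8*R^2) (16*R*(L2+L1)/m))"
  proof (rule ennreal_mono_mult_min)
    have sm: "A \<inter> {\<xi>. \<bar>(\<lambda>\<xi>. (norm \<xi>)^2) \<xi> - \<beta> \<xi>\<bar> \<le> 2*L2 + 2*L1} \<in> sets borel" by measurable
    have hA: "\<And>\<xi>2. \<xi>2 \<in> A \<Longrightarrow> m \<le> norm \<xi> \<and> norm (\<xi>2 - q) \<le> R" using hm by (auto simp: A_def z)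
    show "emeasure lborel (A \<inter> {\<xi>. \<bar>(\<lambda>\<xi>. (norm \<xi>)^2) \<xi> - \<beta> \<xi>\<bar> \<le> 2*L2 + 2*L1}) \<le> ennreal (8*R^2)"
      by (rule ball_area[OF sm, of q]) (use hA R in auto)
    show "emeasure lborel (A \<inter> {\<xi>. \<bar>(\<lambda>\<xi>. (norm \<xi>)^2) \<xi> - \<beta> \<xi>\<bar> \<le> 2*L2 + 2*L1}) \<le> ennreal (16*R*(L2+L1)/m)"
    proof (cases "A = {}")
      case True then show ?thesis by simp
    next
      case False
      then have mx: "m \<le> norm \<xi>" using hA by blast
      have "emeasure lborel (A \<inter> {\<xi>. \<bar>(\<lambda>\<xi>. (norm \<xi>)^2) \<xi> - \<beta> \<xi>\<bar> \<le> 2*L2 + 2*L1}) \<le> ennreal (8*R*(2*L2 + 2*L1)/m)"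
      proof (rule slab_area[OF sm _ R _ m mx, where q=q and cc="\<tau> + (norm \<xi>)^2"])
        show "\<forall>\<eta>\<in>A \<inter> {\<xi>. \<bar>(\<lambda>\<xi>. (norm \<xi>)^2) \<xi> - \<beta> \<xi>\<bar> \<le> 2*L2 + 2*L1}.
            norm (\<eta> - q) \<le> R \<and> \<bar>\<tau> + (norm \<xi>)^2 + 2 * (\<xi> \<bullet> \<eta>)\<bar> \<le> 2*L2 + 2*L1"
        proof
          fix \<eta> assume "\<eta> \<in> A \<inter> {\<xi>. \<bar>(\<lambda>\<xi>. (norm \<xi>)^2) \<xi> - \<beta> \<xi>\<bar> \<le> 2*L2 + 2*L1}"
          then have e1: "\<eta> \<in> A" and e2: "\<bar>(norm \<eta>)^2 - \<beta> \<eta>\<bar> \<le> 2*L2 + 2*L1" by auto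
          have "(norm \<eta>)^2 - \<beta> \<eta> = - (\<tau> + (norm \<xi>)^2 + 2 * (\<xi> \<bullet> \<eta>))"
            by (simp add: \<beta>_def norm_add_sq)
          then show "norm (\<eta> - q) \<le> R \<and> \<bar>\<tau> + (norm \<xi>)^2 + 2 * (\<xi> \<bullet> \<eta>)\<bar> \<le> 2*L2 + 2*L1"
            using e2 hA[OF e1] by simp
        qed
      qed (use L in auto)
      then show ?thesis by (simp add: algebra_simps)
    qed
  qed (use L in auto)
  also have "2*min (2*L2) (2*L1) = 4 * min L2 L1" by (simp add: min_def)
  finally show ?thesis by simp
qed




lemma min_sum_le: "0 \<le> (a::real) \<Longrightarrow> 0 \<le> b \<Longrightarrow> min a b * (a + b) \<le> 2 * a * b"
  by (cases "a \<le> b") (auto simp: min_def algebra_simps intro: mult_right_mono mult_left_mono)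

lemma poly_case_l:
  fixes n M p q l X :: real
  assumes n: "1 \<le> n" and nM: "n \<le> M" and p: "1 \<le> p" and q: "1 \<le> q" and l: "1 \<le> l"
    and lp: "p \<le> l" and lq: "q \<le> l" and res: "M^2 \<le> 48 * l" and X: "0 \<le> X"
    and Xa: "X \<le> 4 * min p q * (128 * n * (p+q)/M)"
  shows "X^6 * M^8 \<le> 32768^6 * 48^5 * (p * q * l)^5 * n^2"
proof -
  have M: "0 < M" using n nM by linarith
  have "X * M \<le> 512 * n * (min p q * (p+q))" using Xa M by (simp add: field_simps)
  also have "\<dots> \<le> 512 * n * (2 * p * q)" using min_sum_le[of p q] p q n by (intro mult_left_mono) auto
  finally have XM: "X * M \<le> 1024 * (n * p * q)" by simp
  have "(X * M)^6 \<le> (1024 * (n * p * q))^6" using XM X M by (intro power_mono) auto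
  then have A: "X^6 * M^6 \<le> 1024^6 * (n^6 * p^6 * q^6)" by (simp add: power_mult_distrib)
  have h1: "n^6 * M^2 \<le> 48^3 * (n^2 * l^3)"
  proof -
    have "n^4 \<le> M^4" using n nM by (intro power_mono) auto
    have e: "n^6 * M^2 = n^2 * n^4 * M^2" by algebra
    also have "n^2 * n^4 * M^2 \<le> n^2 * M^4 * M^2" using \<open>n^4 \<le> M^4\<close> by (intro mult_right_mono mult_left_mono) auto
    also have "\<dots> = n^2 * (M^2)^3" by algebra
    also have "\<dots> \<le> n^2 * (48 * l)^3" using res M by (intro mult_left_mono power_mono) auto
    also have "\<dots> = 48^3 * (n^2 * l^3)" by algebra
    finally show ?thesis .
  qed
  have h2: "p^6 * q^6 \<le> p^5 * q^5 * l^2"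
  proof -
    have "p * q \<le> l * l" using lp lq p q by (intro mult_mono) auto
    then have "p^5 * q^5 * (p * q) \<le> p^5 * q^5 * (l * l)" using p q by (intro mult_left_mono) auto
    moreover have e1: "p^6 * q^6 = p^5 * q^5 * (p * q)" and e2: "p^5 * q^5 * l^2 = p^5 * q^5 * (l * l)" by algebra+
    ultimately show ?thesis by (simp only: e1 e2)
  qed
  have "X^6 * M^8 = (X^6 * M^6) * M^2" by algebra
  also have "\<dots> \<le> 1024^6 * (n^6 * p^6 * q^6) * M^2" using A by (intro mult_right_mono) auto
  also have "\<dots> = 1024^6 * ((n^6 * M^2) * (p^6 * q^6))" by algebra
  also have "\<dots> \<le> 1024^6 * ((48^3 * (n^2 * l^3)) * (p^5 * q^5 * l^2))"
    using n p q l by (intro mult_left_mono mult_mono[OF h1 h2]) auto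
  also have "\<dots> = 1024^6 * 48^3 * ((p * q * l)^5 * n^2)" by algebra
  also have "\<dots> \<le> 32768^6 * 48^5 * ((p * q * l)^5 * n^2)" using p q l n by (intro mult_right_mono) auto
  finally show ?thesis by (simp add: mult.assoc)
qed

lemma core_bound:
  fixes X u v w n M \<mu> :: real
  assumes X: "0 \<le> X" and u: "0 \<le> u" and \<mu>: "0 \<le> \<mu>" "\<mu> \<le> v" "\<mu> \<le> n^2"
    and Xb: "X \<le> 32768 * (u * \<mu>)" and res: "M^2 \<le> 48 * w" and n: "0 \<le> n" and nM: "n \<le> M"
    and key: "u * \<mu>^6 * w ^ 4 \<le> 48 * (v^5 * n^2 * w ^ 5)"
  shows "X^6 * M^8 \<le> 32768^6 * 48^5 * (u * v * w)^5 * n^2"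
proof -
  have M0: "0 \<le> M" using n nM by linarith
  have w: "0 \<le> w" using res by (smt (verit) zero_le_power2)
  have "X^6 \<le> (32768 * (u * \<mu>))^6" using X Xb by (intro power_mono) auto
  also have "\<dots> = 32768^6 * (u^6 * \<mu>^6)" by algebra
  finally have A: "X^6 \<le> 32768^6 * (u^6 * \<mu>^6)" .
  have B: "M^8 \<le> 48^4 * w ^ 4"
  proof -
    have "M^8 = (M^2)^4" by algebra
    also have "\<dots> \<le> (48 * w)^4" using res by (intro power_mono) auto
    also have "\<dots> = 48^4 * w ^ 4" by algebra
    finally show ?thesis .
  qed
  have "X^6 * M^8 \<le> (32768^6 * (u^6 * \<mu>^6)) * (48^4 * w ^ 4)"
    using A B X by (intro mult_mono) auto
  also have "\<dots> = 32768^6 * 48^4 * u^5 * (u * \<mu>^6 * w ^ 4)" by algebra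
  also have "\<dots> \<le> 32768^6 * 48^4 * u^5 * (48 * (v^5 * n^2 * w ^ 5))"
    using key u by (intro mult_left_mono) auto
  also have "\<dots> = 32768^6 * 48^5 * (u * v * w)^5 * n^2" by algebra
  finally show ?thesis .
qed

lemma poly_case_q:
  fixes n M p q l X :: real
  assumes n: "1 \<le> n" and nM: "n \<le> M" and p: "1 \<le> p" and q: "1 \<le> q" and l: "1 \<le> l"
    and pq: "p \<le> q" and lq: "l \<le> q" and res: "M^2 \<le> 48 * q" and X: "0 \<le> X"
    and Xc: "X \<le> 4 * min p l * min (32 * n^2) (4096 * (p+l))"
  shows "X^6 * M^8 \<le> 32768^6 * 48^5 * (p * q * l)^5 * n^2"
proof -
  define u where "u = min p l"
  define v where "v = max p l"
  define \<mu> where "\<mu> = min (n^2) v"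
  have uv: "u *  v = p * l" "p+l \<le> 2 *  v" "1 \<le> u" "u \<le> v" "v \<le> q"
    using pq lq p l by (auto simp: u_def v_def min_def max_def)
  have \<mu>: "0 \<le> \<mu>" "\<mu> \<le> v" "\<mu> \<le> n^2" using uv by (auto simp: \<mu>_def)
  have m1: "min (32 * n^2) (4096 * (p+l)) \<le> 8192 * n^2"
    using zero_le_power2[of n] by linarith
  have m2: "min (32 * n^2) (4096 * (p+l)) \<le> 8192 * v" 
  proof -
    have "4096 * (p+l) \<le> 8192 * v" using uv(2) by simp
    then show ?thesis using min.cobounded2[of "32 * n^2" "4096 * (p+l)"] by (rule order_trans[rotated])
  qed
  have "min (32 * n^2) (4096 * (p+l)) \<le> 8192 * \<mu>"
    using m1 m2 by (auto simp: \<mu>_def min_def)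
  then have "4 * min p l * min (32 * n^2) (4096 * (p+l)) \<le> 4 * min p l * (8192 * \<mu>)"
    using p l by (intro mult_left_mono) auto
  then have "X \<le> 4 * u * (8192 * \<mu>)" using Xc unfolding u_def by linarith
  then have Xb: "X \<le> 32768 * (u * \<mu>)" by simp
  have key: "u * \<mu>^6 * q^4 \<le> 48 * (v^5 * n^2 * q^5)"
  proof -
    have "\<mu>^4 \<le> v^4" using \<mu> by (intro power_mono) auto
    moreover have "\<mu>^2 \<le> (n^2)^2" using \<mu> by (intro power_mono) auto
    ultimately have "u * (\<mu>^4 * \<mu>^2) \<le> v * (v^4 * (n^2)^2)"
      using uv \<mu> by (intro mult_mono) auto
    moreover have e1: "u * \<mu>^6 = u * (\<mu>^4 * \<mu>^2)" and e2: "v * (v^4 * (n^2)^2) = v^5 * (n^2 * n^2)" by algebra+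
    ultimately have a: "u * \<mu>^6 \<le> v^5 * (n^2 * n^2)" by (simp only: e1 e2)
    have "n^2 \<le> M^2" using n nM by (intro power_mono) auto
    then have "n^2 \<le> 48 * q" using res by linarith
    then have "v^5 * (n^2 * n^2) \<le> v^5 * (n^2 * (48 * q))" using uv n by (intro mult_left_mono) auto
    with a have "u * \<mu>^6 \<le> v^5 * (n^2 * (48 * q))" by linarith
    then have "u * \<mu>^6 * q^4 \<le> v^5 * (n^2 * (48 * q)) * q^4" using q by (intro mult_right_mono) auto
    also have "\<dots> = 48 * (v^5 * n^2 * q^5)" by algebra
    finally show ?thesis .
  qed
  have "X^6 * M^8 \<le> 32768^6 * 48^5 * (u * v * q)^5 * n^2"
    by (rule core_bound[OF X _ \<mu> Xb res _ nM key]) (use uv n in auto)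
  also have "u * v * q = p * q * l" using uv(1) by algebra
  hence "(u * v * q)^5 = (p * q * l)^5" by (rule arg_cong[where f="\<lambda>x. x^5"])
  finally show ?thesis .
qed

lemma poly_case_p:
  fixes n M p q l X :: real
  assumes n: "1 \<le> n" and nM: "n \<le> M" and p: "1 \<le> p" and q: "1 \<le> q" and l: "1 \<le> l"
    and qp: "q \<le> p" and lp: "l \<le> p" and res: "M^2 \<le> 48 * p" and X: "0 \<le> X"
    and Xa: "X \<le> 4 * min p q * min (32 * n^2) (128 * n * (p+q)/M)"
    and Xb: "X \<le> 4 * min q l * min (32 * M^2) (4096 * (q+l))"
    and Xc: "X \<le> 4 * min p l * min (32 * n^2) (4096 * (p+l))"
  shows "X^6 * M^8 \<le> 32768^6 * 48^5 * (p * q * l)^5 * n^2"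
proof -
  define u where "u = min q l"
  define v where "v = max q l"
  define \<mu> where "\<mu> = min v (n^2)"
  have uv: "u *  v = q * l" "q+l \<le> 2 *  v" "1 \<le> u" "u \<le> v" "u \<le> p"
    using qp lp q l by (auto simp: u_def v_def min_def max_def)
  have \<mu>: "0 \<le> \<mu>" "\<mu> \<le> v" "\<mu> \<le> n^2" using uv by (auto simp: \<mu>_def)
  have X1: "X \<le> 32768 * (u *  v)"
  proof -
    have "4 * min q l * min (32 * M^2) (4096 * (q+l)) \<le> 4 * min q l * (4096 * (q+l))"
      using q l by (intro mult_left_mono) auto
    then have "X \<le> 4 * u * (4096 * (q+l))" using Xb by (simp add: u_def)
    also have "\<dots> \<le> 4 * u * (4096 * (2 *  v))" using uv by (intro mult_left_mono) auto
    finally show ?thesis by simp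
  qed
  have X2: "X \<le> 32768 * (u * n^2)"
  proof -
    have "X \<le> 4 * q * (32 * n^2)"
      using Xa q p by (smt (verit) min.cobounded1 min.cobounded2 mult_mono mult_left_mono zero_le_power2)
    moreover have "X \<le> 4 * l * (32 * n^2)"
      using Xc l p by (smt (verit) min.cobounded1 min.cobounded2 mult_mono mult_left_mono zero_le_power2)
    ultimately have "X \<le> 128 * (u * n^2)" by (auto simp: u_def min_def)
    then show ?thesis using uv by (smt (verit) mult_nonneg_nonneg zero_le_power2)
  qed
  have Xb': "X \<le> 32768 * (u * \<mu>)" using X1 X2 by (auto simp: \<mu>_def min_def)
  have key: "u * \<mu>^6 * p^4 \<le> 48 * (v^5 * n^2 * p^5)"
  proof -
    have "\<mu>^5 \<le> v^5" using \<mu> by (intro power_mono) auto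
    then have "\<mu>^5 * \<mu> \<le> v^5 * n^2" using \<mu> by (intro mult_mono) auto
    then have "u * (\<mu>^5 * \<mu>) \<le> p * (v^5 * n^2)" using uv \<mu> by (intro mult_mono) auto
    then have "u * (\<mu>^5 * \<mu>) * p^4 \<le> p * (v^5 * n^2) * p^4" using p by (intro mult_right_mono) auto
    moreover have e1: "u * \<mu>^6 * p^4 = u * (\<mu>^5 * \<mu>) * p^4" and e2: "p * (v^5 * n^2) * p^4 = v^5 * n^2 * p^5" by algebra+
    ultimately have "u * \<mu>^6 * p^4 \<le> v^5 * n^2 * p^5" by (simp only: e1 e2)
    moreover have "0 \<le> v^5 * n^2 * p^5" using uv p by auto
    ultimately show ?thesis by linarith
  qed
  have "X^6 * M^8 \<le> 32768^6 * 48^5 * (u * v * p)^5 * n^2"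
    by (rule core_bound[OF X _ \<mu> Xb' res _ nM key]) (use uv n in auto)
  also have "u * v * p = p * q * l" using uv(1) by algebra
  hence "(u * v * p)^5 = (p * q * l)^5" by (rule arg_cong[where f="\<lambda>x. x^5"])
  finally show ?thesis .
qed




lemma pw1: "0 < (x::real) \<Longrightarrow> (x powr (5/12))^12 = x^5"
proof -
  assume x: "0 < x"
  have "(x powr (5/12))^12 = x powr (real 12 * (5/12))" using x by (simp add: powr_power)
  also have "\<dots> = x powr (real 5)" by simp
  also have "\<dots> = x^5" using x by (rule powr_realpow)
  finally show ?thesis .
qed

lemma pw2: "0 < (x::real) \<Longrightarrow> (x powr (-1/2))^12 = 1/x^6"
proof -
  assume x: "0 < x"
  have "(x powr (-1/2))^12 = x powr (real 12 * (-1/2))" using x by (simp add: powr_power)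
  also have "\<dots> = x powr (- real 6)" by simp
  also have "\<dots> = 1/x^6" using x by (simp add: powr_minus_divide powr_realpow)
  finally show ?thesis .
qed

lemma pw3: "0 < (x::real) \<Longrightarrow> (x powr (1/6))^12 = x^2"
proof -
  assume x: "0 < x"
  have "(x powr (1/6))^12 = x powr (real 12 * (1/6))" using x by (simp add: powr_power)
  also have "\<dots> = x powr (real 2)" by simp
  also have "\<dots> = x^2" using x by (rule powr_realpow)
  finally show ?thesis .
qed

lemma final_ineq:
  fixes n M p q l NN X :: real
  assumes n: "1 \<le> n" and nM: "n \<le> M" and p: "1 \<le> p" and q: "1 \<le> q" and l: "1 \<le> l"
    and res: "M^2 \<le> 48 * max p (max q l)" and NN: "1 \<le> NN" "NN \<le> 6 * M" and X: "0 \<le> X"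
    and Xa: "X \<le> 4 * min p q * min (32 * n^2) (128 * n * (p+q) / M)"
    and Xb: "X \<le> 4 * min q l * min (32 * M^2) (4096 * (q+l))"
    and Xc: "X \<le> 4 * min p l * min (32 * n^2) (4096 * (p+l))"
  shows "sqrt X \<le> 9437184 * p powr (5/12) * q powr (5/12) * l powr (5/12) * NN powr (-1/2) * (n/M) powr (1/6)"
proof -
  define K0 :: real where "K0 = 32768^6 * 48^5"
  have M: "0 < M" using n nM by linarith
  have Y: "X^6 * M^8 \<le> K0 * (p * q * l)^5 * n^2"
  proof (cases "p \<le> l \<and> q \<le> l")
    case True
    then have r: "M^2 \<le> 48 * l" using res by (simp add: max_def split: if_splits)
    have "min (32 * n^2) (128 * n * (p+q) / M) \<le> 128 * n * (p+q) / M" by simp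
    then have "4 * min p q * min (32 * n^2) (128 * n * (p+q) / M) \<le> 4 * min p q * (128 * n * (p+q) / M)"
      using p q by (intro mult_left_mono) auto
    then have Xa': "X \<le> 4 * min p q * (128 * n * (p+q) / M)" using Xa by linarith
    show ?thesis unfolding K0_def by (rule poly_case_l[OF n nM p q l _ _ r X Xa']) (use True in auto)
  next
    case False
    show ?thesis
    proof (cases "p \<le> q")
      case True
      with False have "l \<le> q" by auto
      then have r: "M^2 \<le> 48 * q" using res True by (simp add: max_def split: if_splits)
      show ?thesis unfolding K0_def by (rule poly_case_q[OF n nM p q l True \<open>l \<le> q\<close> r X Xc])
    next
      case pq: False
      with False have "l \<le> p" by auto
      then have r: "M^2 \<le> 48 * p" using res pq by (simp add: max_def split: if_splits)
      have "q \<le> p" using pq by simp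
      show ?thesis unfolding K0_def by (rule poly_case_p[OF n nM p q l \<open>q \<le> p\<close> \<open>l \<le> p\<close> r X Xa Xb Xc])
    qed
  qed
  define R where "R = p powr (5/12) * q powr (5/12) * l powr (5/12) * NN powr (-1/2) * (n/M) powr (1/6)"
  have R0: "0 < R" unfolding R_def using p q l NN n M by simp
  have R12: "R^12 = (p * q * l)^5 * n^2 / (NN^6 * M^2)"
  proof -
    have "R^12 = (p powr (5/12))^12 * (q powr (5/12))^12 * (l powr (5/12))^12 * (NN powr (-1/2))^12 * ((n/M) powr (1/6))^12"
      unfolding R_def by (simp only: power_mult_distrib)
    also have "\<dots> = p^5 * q^5 * l^5 * (1/NN^6) * (n/M)^2"
      using p q l NN n M by (simp only: pw1 pw2 pw3 divide_pos_pos less_le_trans[OF zero_less_one])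
    also have "\<dots> = (p * q * l)^5 * n^2 / (NN^6 * M^2)"
      by (simp add: power_mult_distrib power_divide)
    finally show ?thesis .
  qed
  have NN6: "NN^6 \<le> 6^6 * M^6"
  proof -
    have "NN^6 \<le> (6 * M)^6" using NN by (intro power_mono) auto
    then show ?thesis by (simp add: power_mult_distrib)
  qed
  have PP: "0 \<le> (p * q * l)^5 * n^2" using p q l by simp
  have "X^6 \<le> K0 * (p * q * l)^5 * n^2 / M^8"
    using Y M by (simp add: pos_le_divide_eq)
  also have "\<dots> \<le> 9437184^12 * ((p * q * l)^5 * n^2 / (NN^6 * M^2))"
  proof -
    have "K0 * (NN^6 * M^2) \<le> K0 * (6^6 * M^6 * M^2)"
      using NN6 M by (intro mult_left_mono mult_right_mono) (auto simp: K0_def)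
    also have "\<dots> = (K0 * 6^6) * M^8" by algebra
    also have "\<dots> \<le> 9437184^12 * M^8" using M by (intro mult_right_mono) (auto simp: K0_def)
    finally have a: "K0 * (NN^6 * M^2) \<le> 9437184^12 * M^8" .
    have pos: "0 < NN^6 * M^2" "0 < M^8" using NN M by auto
    have "K0 / M^8 \<le> 9437184^12 / (NN^6 * M^2)"
      using a pos by (simp add: frac_le_eq field_simps)
    then have "K0 / M^8 * ((p * q * l)^5 * n^2) \<le> 9437184^12 / (NN^6 * M^2) * ((p * q * l)^5 * n^2)"
      using PP by (rule mult_right_mono)
    then show ?thesis by (simp add: field_simps)
  qed
  also have "\<dots> = (9437184 * R)^12" by (simp add: R12 power_mult_distrib)
  finally have "(sqrt X)^12 \<le> (9437184 * R)^12"
  proof -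
    assume h: "X^6 \<le> (9437184 * R)^12"
    have "(sqrt X)^12 = ((sqrt X)^2)^6" by algebra
    also have "\<dots> = X^6" using X by simp
    finally show ?thesis using h by simp
  qed
  then have "sqrt X \<le> 9437184 * R"
    using power_mono_iff[of "sqrt X" "9437184 * R" 12] R0 X by simp
  then show ?thesis by (simp add: R_def mult.assoc)
qed




lemma dyadic_ge: "dyadic N \<Longrightarrow> 1 \<le> N \<and> (N = 1 \<or> 2 \<le> N)"
proof -
  assume "dyadic N"
  then obtain n :: nat where N: "N = 2^n" by (auto simp: dyadic_def)
  show ?thesis
  proof (cases n)
    case 0 then show ?thesis using N by simp
  next
    case (Suc k)
    have h: "(1::real) \<le> 2^k" by simp
    have "N = 2 * 2^k" using N Suc by simp
    then show ?thesis using h by linarith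
  qed
qed

lemma Pset_DD: "dyadic N \<Longrightarrow> z \<in> Pset N \<Longrightarrow> fst z \<in> DD N"
  using dyadic_ge[of N] by (auto simp: Pset_def DD_def split: if_splits)

lemma Wset_le: "dyadic L \<Longrightarrow> z \<in> Wset s L \<Longrightarrow> \<bar>snd z + s * norm (fst z)\<bar> \<le> 2*L"
  using dyadic_ge[of L] by (auto simp: Wset_def split: if_splits)

lemma Sset_le: "dyadic L \<Longrightarrow> z \<in> Sset L \<Longrightarrow> \<bar>snd z + (norm (fst z))^2\<bar> \<le> 2*L"
  using dyadic_ge[of L] by (auto simp: Sset_def split: if_splits)

lemma good_f:
  assumes u: "unitL2_supp f (Pset N \<inter> Wset s L)" and dN: "dyadic N" and dL: "dyadic L"
  shows "good f (SFs N s L)"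
proof -
  from u have m: "f \<in> borel_measurable lborel" and n: "(\<integral>\<^sup>+ z. ennreal ((norm (f z))\<^sup>2) \<partial>lborel) = 1"
    and s: "\<forall>z. f z \<noteq> 0 \<longrightarrow> z \<in> Pset N \<inter> Wset s L" by (auto simp: unitL2_supp_def)
  have "\<forall>z. f z \<noteq> 0 \<longrightarrow> z \<in> SFs N s L"
  proof (intro allI impI)
    fix z assume "f z \<noteq> 0"
    then have "z \<in> Pset N" "z \<in> Wset s L" using s by blast+
    then show "z \<in> SFs N s L" using Pset_DD[OF dN] Wset_le[OF dL] by (auto simp: SFs_def)
  qed
  then show ?thesis using m n by (simp add: good_def SFs_meas)
qed

lemma good_g:
  assumes u: "unitL2_supp f (Pset N \<inter> Sset L)" and dN: "dyadic N" and dL: "dyadic L"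
  shows "good f (SSs N L)"
proof -
  from u have m: "f \<in> borel_measurable lborel" and n: "(\<integral>\<^sup>+ z. ennreal ((norm (f z))\<^sup>2) \<partial>lborel) = 1"
    and s: "\<forall>z. f z \<noteq> 0 \<longrightarrow> z \<in> Pset N \<inter> Sset L" by (auto simp: unitL2_supp_def)
  have "\<forall>z. f z \<noteq> 0 \<longrightarrow> z \<in> SSs N L"
  proof (intro allI impI)
    fix z assume "f z \<noteq> 0"
    then have "z \<in> Pset N" "z \<in> Sset L" using s by blast+
    then show "z \<in> SSs N L" using Pset_DD[OF dN] Sset_le[OF dL] by (auto simp: SSs_def)
  qed
  then show ?thesis using m n by (simp add: good_def SSs_meas)
qed

lemma norm_I_le:
  assumes "JJ F G1 G2 \<le> ennreal B" "0 \<le> B"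
  shows "norm (\<integral> z. F (fst z - snd z) * G1 (fst z) * G2 (snd z) \<partial>(lborel \<Otimes>\<^sub>M lborel)) \<le> B"
proof (cases "integrable (lborel \<Otimes>\<^sub>M lborel) (\<lambda>z. F (fst z - snd z) * G1 (fst z) * G2 (snd z))")
  case True
  have "ennreal (norm (\<integral> z. F (fst z - snd z) * G1 (fst z) * G2 (snd z) \<partial>(lborel \<Otimes>\<^sub>M lborel)))
     \<le> (\<integral>\<^sup>+z. ennreal (norm (F (fst z - snd z) * G1 (fst z) * G2 (snd z))) \<partial>(lborel \<Otimes>\<^sub>M lborel))"
    by (rule integral_norm_bound_ennreal[OF True])
  also have "\<dots> = JJ F G1 G2" unfolding JJ_def by (simp add: norm_mult)
  also have "\<dots> \<le> ennreal B" by (rule assms(1))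
  finally show ?thesis using assms(2) by simp
next
  case False
  then show ?thesis using assms(2) by (simp add: not_integrable_integral_eq)
qed

lemma nonzero_point:
  assumes "(\<integral> z. F (fst z - snd z) * G1 (fst z) * G2 (snd z) \<partial>(lborel \<Otimes>\<^sub>M lborel)) \<noteq> (0::complex)"
  shows "\<exists>z. F (fst z - snd z) \<noteq> 0 \<and> G1 (fst z) \<noteq> 0 \<and> G2 (snd z) \<noteq> 0"
proof (rule ccontr)
  assume "\<not> ?thesis"
  then have "(\<lambda>z. F (fst z - snd z) * G1 (fst z) * G2 (snd z)) = (\<lambda>z. 0)" by (auto simp: fun_eq_iff)
  then show False using assms by simp
qed

lemma resonance:
  fixes a b d s t1 t2 L1 L2 L n m :: real
  assumes a: "0 \<le> a" "a \<le> 2*n" and b: "m/2 \<le> b" and d: "0 \<le> d" "d \<le> 3*m" and s: "\<bar>s\<bar> \<le> 1"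
    and n: "1 \<le> n" and nm: "64*n \<le> m"
    and e1: "\<bar>t1 + a^2\<bar> \<le> 2*L1" and e2: "\<bar>t2 + b^2\<bar> \<le> 2*L2" and e3: "\<bar>t1 - t2 + s*d\<bar> \<le> 2*L"
  shows "m^2 \<le> 48 * max L1 (max L2 L)"
proof -
  have m: "64 \<le> m" using n nm by linarith
  have "a^2 \<le> (2*n)^2" using a by (intro power_mono) auto
  moreover have "(64*n)^2 \<le> m^2" using nm n by (intro power_mono) auto
  ultimately have a2: "1024 * a^2 \<le> m^2" by (simp add: power_mult_distrib)
  have "(m/2)^2 \<le> b^2" using b m by (intro power_mono) auto
  then have b2: "m^2 \<le> 4 * b^2" by (simp add: power_divide)
  have "64 * m \<le> m * m" using m by (intro mult_right_mono) auto
  then have mm: "64 * m \<le> m^2" by (simp add: power2_eq_square)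
  have "\<bar>s*d\<bar> \<le> d" using s d by (simp add: abs_mult mult_le_cancel_right1) (metis abs_ge_zero mult_left_le_one_le)
  then have sd: "\<bar>s*d\<bar> \<le> 3*m" using d by linarith
  have "t2 + b^2 \<le> 2*L2" "-(t1 + a^2) \<le> 2*L1" "t1 - t2 + s*d \<le> 2*L"
    using abs_le_D1[OF e2] abs_le_D2[OF e1] abs_le_D1[OF e3] by auto
  then have up: "b^2 - a^2 + s*d \<le> 2*L1 + 2*L2 + 2*L" by linarith
  have "- (s*d) \<le> 3*m" using abs_le_D2[OF sd] by simp
  then have lo: "m^2/8 \<le> b^2 - a^2 + s*d" using a2 b2 mm zero_le_power2[of m] by linarith
  have "m^2/8 \<le> 2*L1 + 2*L2 + 2*L" using order_trans[OF lo up] .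
  then have "m^2 \<le> 8*(2*L1 + 2*L2 + 2*L)" by simp
  also have "\<dots> \<le> 48 * max L1 (max L2 L)" by (simp add: max_def)
  finally show ?thesis .
qed




lemma sq_le_of_sqrt: "0 \<le> x \<Longrightarrow> x \<le> sqrt K \<Longrightarrow> x^2 \<le> K"
  by (metis abs_of_nonneg order.trans real_sqrt_le_iff real_sqrt_abs sqrt_le_D)

lemma nn_rhs: "1 \<le> (N::real) \<Longrightarrow> 0 \<le> 9437184 * a powr (5/12) * b powr (5/12) * c powr (5/12) * N powr (-1/2) * m powr (1/6)"
  by simp

lemma fst_diff_pt: "fst ((x::pt) - y) = fst x - fst y" and snd_diff_pt: "snd ((x::pt) - y) = snd x - snd y"
  by simp_all

lemma case_small1:
  fixes f g1 g2 :: "pt \<Rightarrow> complex"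
  assumes gf: "good f (SFs N s L)" and g1: "good g1 (SSs N1 L1)" and g2: "good g2 (SSs N2 L2)"
    and ge: "1 \<le> N" "1 \<le> N1" "1 \<le> N2" "1 \<le> L" "1 \<le> L1" "1 \<le> L2" and s: "\<bar>s\<bar> \<le> 1"
    and c: "64 * N1 \<le> N2"
    and z1: "\<zeta>1 \<in> SSs N1 L1" and z2: "\<zeta>2 \<in> SSs N2 L2" and z: "\<zeta>1 - \<zeta>2 \<in> SFs N s L"
  shows "norm (\<integral> z. f (fst z - snd z) * g1 (fst z) * g2 (snd z) \<partial>(lborel \<Otimes>\<^sub>M lborel))
     \<le> 9437184 * L1 powr (5/12) * L2 powr (5/12) * L powr (5/12) * N powr (-1/2) * (N1/N2) powr (1/6)"
proof -
  define I where "I = (\<integral> z. f (fst z - snd z) * g1 (fst z) * g2 (snd z) \<partial>(lborel \<Otimes>\<^sub>M lborel))"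
  have N2: "64 \<le> N2" using c ge by linarith
  obtain \<xi>1 \<tau>1 where e1: "\<zeta>1 = (\<xi>1, \<tau>1)" by (cases \<zeta>1)
  obtain \<xi>2 \<tau>2 where e2: "\<zeta>2 = (\<xi>2, \<tau>2)" by (cases \<zeta>2)
  have A1: "norm \<xi>1 \<le> 2*N1" "\<bar>\<tau>1 + (norm \<xi>1)^2\<bar> \<le> 2*L1" using z1 by (auto simp: e1 SSs_def DD_def)
  have A2: "norm \<xi>2 \<le> 2*N2" "N2/2 \<le> norm \<xi>2" "\<bar>\<tau>2 + (norm \<xi>2)^2\<bar> \<le> 2*L2"
    using z2 N2 by (auto simp: e2 SSs_def DD_def)
  have A3: "norm (\<xi>1 - \<xi>2) \<le> 2*N" "2 \<le> N \<longrightarrow> N/2 \<le> norm (\<xi>1 - \<xi>2)" "\<bar>\<tau>1 - \<tau>2 + s * norm (\<xi>1 - \<xi>2)\<bar> \<le> 2*L"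
    using z by (auto simp: e1 e2 SFs_def DD_def)
  have d: "norm (\<xi>1 - \<xi>2) \<le> 3*N2"
    using norm_triangle_ineq4[of \<xi>1 \<xi>2] A1 A2 c by linarith
  have res: "N2^2 \<le> 48 * max L1 (max L2 L)"
    by (rule resonance[OF _ A1(1) A2(2) _ d s ge(2) c A1(2) A2(3) A3(3)]) auto
  have NN: "N \<le> 6*N2" using A3(2) d N2 by (cases "2 \<le> N") auto
  have [simp]: "0 < N1" "0 < N2" using ge by auto
  define Ka where "Ka = 4*min L2 L1 * min (8*(2*N1)^2) (16*(2*N1)*(L2+L1)/(N2/4))"
  define Kb where "Kb = 4*min L2 L * min (32*N2^2) (4096*(L2+L))"
  define Kc where "Kc = 4*min L1 L * min (32*N1^2) (4096*(L1+L))"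
  have Kpos: "0 < Ka" "0 < Kb" "0 < Kc" using ge by (auto simp: Ka_def Kb_def Kc_def)
  have "JJ f g1 g2 \<le> ennreal (sqrt Ka)"
  proof (rule cs_a[OF gf g1 g2 Kpos(1)], rule ballI)
    fix \<zeta> assume "\<zeta> \<in> SFs N s L"
    show "emeasure lborel {\<zeta>2. \<zeta>2 \<in> SSs N2 L2 \<and> \<zeta> + \<zeta>2 \<in> SSs N1 L1} \<le> ennreal Ka"
      unfolding Ka_def
    proof (rule fiber_a)
      show "\<forall>\<xi>2\<in>DD N2. fst \<zeta> + \<xi>2 \<in> DD N1 \<longrightarrow> N2/4 \<le> norm (fst \<zeta>) \<and> norm (\<xi>2 - (- fst \<zeta>)) \<le> 2*N1"
      proof (intro ballI impI)
        fix \<eta> assume h1: "\<eta> \<in> DD N2" and h2: "fst \<zeta> + \<eta> \<in> DD N1"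
        have a: "N2/2 \<le> norm \<eta>" using h1 N2 by (auto simp: DD_def)
        have b: "norm (fst \<zeta> + \<eta>) \<le> 2*N1" using h2 by (auto simp: DD_def)
        have "norm \<eta> \<le> norm (fst \<zeta> + \<eta>) + norm (fst \<zeta>)"
          using norm_triangle_ineq4[of "fst \<zeta> + \<eta>" "fst \<zeta>"] by simp
        then have "N2/4 \<le> norm (fst \<zeta>)" using a b c ge by linarith
        moreover have "norm (\<eta> - (- fst \<zeta>)) = norm (fst \<zeta> + \<eta>)" by (simp add: add.commute)
        ultimately show "N2/4 \<le> norm (fst \<zeta>) \<and> norm (\<eta> - (- fst \<zeta>)) \<le> 2*N1" using b by simp
      qed
    qed (use ge in auto)
  qed
  then have Ia: "norm I \<le> sqrt Ka" unfolding I_def by (rule norm_I_le) (use Kpos in simp)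
  have "JJ f g1 g2 \<le> ennreal (sqrt Kb)"
  proof (rule cs_b[OF gf g1 g2 Kpos(2)], rule ballI)
    fix \<zeta>1 assume "\<zeta>1 \<in> SSs N1 L1"
    show "emeasure lborel {\<zeta>2. \<zeta>2 \<in> SSs N2 L2 \<and> \<zeta>1 - \<zeta>2 \<in> SFs N s L} \<le> ennreal Kb"
      unfolding Kb_def by (rule fiber_b) (use ge s in auto)
  qed
  then have Ib: "norm I \<le> sqrt Kb" unfolding I_def by (rule norm_I_le) (use Kpos in simp)
  have "JJ f g1 g2 \<le> ennreal (sqrt Kc)"
  proof (rule cs_c[OF gf g1 g2 Kpos(3)], rule ballI)
    fix \<zeta>2 assume "\<zeta>2 \<in> SSs N2 L2"
    show "emeasure lborel {\<zeta>1. \<zeta>1 \<in> SSs N1 L1 \<and> \<zeta>1 - \<zeta>2 \<in> SFs N s L} \<le> ennreal Kc"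
      unfolding Kc_def by (rule fiber_c) (use ge s in auto)
  qed
  then have Ic: "norm I \<le> sqrt Kc" unfolding I_def by (rule norm_I_le) (use Kpos in simp)
  have Ka': "Ka = 4 * min L1 L2 * min (32 * N1^2) (128 * N1 * (L1+L2) / N2)"
  proof -
    have e1: "8*(2*N1)^2 = 32 * N1^2" by (simp add: power2_eq_square)
    have e2: "16*(2*N1)*(L2+L1)/(N2/4) = 128 * N1 * (L1+L2) / N2" by (simp add: field_simps)
    show ?thesis unfolding Ka_def e1 e2 by (simp only: min.commute[of L2 L1])
  qed
  have Xa: "(norm I)^2 \<le> 4 * min L1 L2 * min (32 * N1^2) (128 * N1 * (L1+L2) / N2)"
    using sq_le_of_sqrt[OF norm_ge_zero Ia] Ka' by simp
  have Xb: "(norm I)^2 \<le> 4 * min L2 L * min (32 * N2^2) (4096 * (L2+L))"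
    using sq_le_of_sqrt[OF norm_ge_zero Ib] by (simp add: Kb_def)
  have Xc: "(norm I)^2 \<le> 4 * min L1 L * min (32 * N1^2) (4096 * (L1+L))"
    using sq_le_of_sqrt[OF norm_ge_zero Ic] by (simp add: Kc_def)
  have "sqrt ((norm I)^2) \<le> 9437184 * L1 powr (5/12) * L2 powr (5/12) * L powr (5/12) * N powr (-1/2) * (N1/N2) powr (1/6)"
    by (rule final_ineq[OF ge(2) _ ge(5) ge(6) ge(4) res ge(1) NN _ Xa Xb Xc]) (use c ge in auto)
  then show ?thesis by (simp add: I_def)
qed

lemma case_small2:
  fixes f g1 g2 :: "pt \<Rightarrow> complex"
  assumes gf: "good f (SFs N s L)" and g1: "good g1 (SSs N1 L1)" and g2: "good g2 (SSs N2 L2)"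
    and ge: "1 \<le> N" "1 \<le> N1" "1 \<le> N2" "1 \<le> L" "1 \<le> L1" "1 \<le> L2" and s: "\<bar>s\<bar> \<le> 1"
    and c: "64 * N2 \<le> N1"
    and z1: "\<zeta>1 \<in> SSs N1 L1" and z2: "\<zeta>2 \<in> SSs N2 L2" and z: "\<zeta>1 - \<zeta>2 \<in> SFs N s L"
  shows "norm (\<integral> z. f (fst z - snd z) * g1 (fst z) * g2 (snd z) \<partial>(lborel \<Otimes>\<^sub>M lborel))
     \<le> 9437184 * L1 powr (5/12) * L2 powr (5/12) * L powr (5/12) * N powr (-1/2) * (N2/N1) powr (1/6)"
proof -
  define I where "I = (\<integral> z. f (fst z - snd z) * g1 (fst z) * g2 (snd z) \<partial>(lborel \<Otimes>\<^sub>M lborel))"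
  have N1: "64 \<le> N1" using c ge by linarith
  obtain \<xi>1 \<tau>1 where e1: "\<zeta>1 = (\<xi>1, \<tau>1)" by (cases \<zeta>1)
  obtain \<xi>2 \<tau>2 where e2: "\<zeta>2 = (\<xi>2, \<tau>2)" by (cases \<zeta>2)
  have A1: "norm \<xi>1 \<le> 2*N1" "N1/2 \<le> norm \<xi>1" "\<bar>\<tau>1 + (norm \<xi>1)^2\<bar> \<le> 2*L1"
    using z1 N1 by (auto simp: e1 SSs_def DD_def)
  have A2: "norm \<xi>2 \<le> 2*N2" "\<bar>\<tau>2 + (norm \<xi>2)^2\<bar> \<le> 2*L2" using z2 by (auto simp: e2 SSs_def DD_def)
  have A3: "norm (\<xi>1 - \<xi>2) \<le> 2*N" "2 \<le> N \<longrightarrow> N/2 \<le> norm (\<xi>1 - \<xi>2)" "\<bar>\<tau>1 - \<tau>2 + s * norm (\<xi>1 - \<xi>2)\<bar> \<le> 2*L"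
    using z by (auto simp: e1 e2 SFs_def DD_def)
  have d: "norm (\<xi>1 - \<xi>2) \<le> 3*N1"
    using norm_triangle_ineq4[of \<xi>1 \<xi>2] A1 A2 c ge by linarith
  have e3: "\<bar>\<tau>2 - \<tau>1 + (-s) * norm (\<xi>1 - \<xi>2)\<bar> \<le> 2*L"
  proof -
    have "\<tau>2 - \<tau>1 + (-s) * norm (\<xi>1 - \<xi>2) = - (\<tau>1 - \<tau>2 + s * norm (\<xi>1 - \<xi>2))" by simp
    then show ?thesis using A3(3) by (simp only: abs_minus_cancel)
  qed
  have res: "N1^2 \<le> 48 * max L2 (max L1 L)"
    by (rule resonance[OF _ A2(1) A1(2) _ d _ ge(3) c A2(2) A1(3) e3]) (use s in auto)
  have NN: "N \<le> 6*N1" using A3(2) d N1 by (cases "2 \<le> N") auto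
  have [simp]: "0 < N1" "0 < N2" using ge by auto
  define Ka where "Ka = 4*min L2 L1 * min (8*(2*N2)^2) (16*(2*N2)*(L2+L1)/(N1/4))"
  define Kb where "Kb = 4*min L1 L * min (32*N1^2) (4096*(L1+L))"
  define Kc where "Kc = 4*min L2 L * min (32*N2^2) (4096*(L2+L))"
  have Kpos: "0 < Ka" "0 < Kb" "0 < Kc" using ge by (auto simp: Ka_def Kb_def Kc_def)
  have "JJ f g1 g2 \<le> ennreal (sqrt Ka)"
  proof (rule cs_a[OF gf g1 g2 Kpos(1)], rule ballI)
    fix \<zeta> assume "\<zeta> \<in> SFs N s L"
    show "emeasure lborel {\<zeta>2. \<zeta>2 \<in> SSs N2 L2 \<and> \<zeta> + \<zeta>2 \<in> SSs N1 L1} \<le> ennreal Ka"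
      unfolding Ka_def
    proof (rule fiber_a)
      show "\<forall>\<xi>2\<in>DD N2. fst \<zeta> + \<xi>2 \<in> DD N1 \<longrightarrow> N1/4 \<le> norm (fst \<zeta>) \<and> norm (\<xi>2 - 0) \<le> 2*N2"
      proof (intro ballI impI)
        fix \<eta> assume h1: "\<eta> \<in> DD N2" and h2: "fst \<zeta> + \<eta> \<in> DD N1"
        have a: "norm \<eta> \<le> 2*N2" using h1 by (auto simp: DD_def)
        have b: "N1/2 \<le> norm (fst \<zeta> + \<eta>)" using h2 N1 by (auto simp: DD_def)
        have "norm (fst \<zeta> + \<eta>) \<le> norm (fst \<zeta>) + norm \<eta>" by (rule norm_triangle_ineq)
        then have "N1/4 \<le> norm (fst \<zeta>)" using a b c ge by linarith
        then show "N1/4 \<le> norm (fst \<zeta>) \<and> norm (\<eta> - 0) \<le> 2*N2" using a by simp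
      qed
    qed (use ge in auto)
  qed
  then have Ia: "norm I \<le> sqrt Ka" unfolding I_def by (rule norm_I_le) (use Kpos in simp)
  have "JJ f g1 g2 \<le> ennreal (sqrt Kb)"
  proof (rule cs_c[OF gf g1 g2 Kpos(2)], rule ballI)
    fix \<zeta>2 assume "\<zeta>2 \<in> SSs N2 L2"
    show "emeasure lborel {\<zeta>1. \<zeta>1 \<in> SSs N1 L1 \<and> \<zeta>1 - \<zeta>2 \<in> SFs N s L} \<le> ennreal Kb"
      unfolding Kb_def by (rule fiber_c) (use ge s in auto)
  qed
  then have Ib: "norm I \<le> sqrt Kb" unfolding I_def by (rule norm_I_le) (use Kpos in simp)
  have "JJ f g1 g2 \<le> ennreal (sqrt Kc)"
  proof (rule cs_b[OF gf g1 g2 Kpos(3)], rule ballI)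
    fix \<zeta>1 assume "\<zeta>1 \<in> SSs N1 L1"
    show "emeasure lborel {\<zeta>2. \<zeta>2 \<in> SSs N2 L2 \<and> \<zeta>1 - \<zeta>2 \<in> SFs N s L} \<le> ennreal Kc"
      unfolding Kc_def by (rule fiber_b) (use ge s in auto)
  qed
  then have Ic: "norm I \<le> sqrt Kc" unfolding I_def by (rule norm_I_le) (use Kpos in simp)
  have Ka': "Ka = 4 * min L2 L1 * min (32 * N2^2) (128 * N2 * (L2+L1) / N1)"
  proof -
    have e1: "8*(2*N2)^2 = 32 * N2^2" by (simp add: power2_eq_square)
    have e2: "16*(2*N2)*(L2+L1)/(N1/4) = 128 * N2 * (L2+L1) / N1" by (simp add: field_simps)
    show ?thesis unfolding Ka_def e1 e2 by (rule refl)
  qed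
  have Xa: "(norm I)^2 \<le> 4 * min L2 L1 * min (32 * N2^2) (128 * N2 * (L2+L1) / N1)"
    using sq_le_of_sqrt[OF norm_ge_zero Ia] Ka' by simp
  have Xb: "(norm I)^2 \<le> 4 * min L1 L * min (32 * N1^2) (4096 * (L1+L))"
    using sq_le_of_sqrt[OF norm_ge_zero Ib] by (simp add: Kb_def)
  have Xc: "(norm I)^2 \<le> 4 * min L2 L * min (32 * N2^2) (4096 * (L2+L))"
    using sq_le_of_sqrt[OF norm_ge_zero Ic] by (simp add: Kc_def)
  have "sqrt ((norm I)^2) \<le> 9437184 * L2 powr (5/12) * L1 powr (5/12) * L powr (5/12) * N powr (-1/2) * (N2/N1) powr (1/6)"
    by (rule final_ineq[OF ge(3) _ ge(6) ge(5) ge(4) res ge(1) NN _ Xa Xb Xc]) (use c ge in auto)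
  then show ?thesis by (simp add: I_def mult_ac)
qed




theorem proposition4p8:
  shows "\<exists>c>0. \<exists>C. \<forall>N N1 N2 L L1 L2 s f g1 g2.
    dyadic N \<and> dyadic N1 \<and> dyadic N2 \<and> dyadic L \<and> dyadic L1 \<and> dyadic L2
    \<and> (s = 1 \<or> s = -1)
    \<and> (N1 \<le> c * N2 \<or> N2 \<le> c * N1)
    \<and> unitL2_supp f (Pset N \<inter> Wset s L)
    \<and> unitL2_supp g1 (Pset N1 \<inter> Sset L1)
    \<and> unitL2_supp g2 (Pset N2 \<inter> Sset L2)
    \<longrightarrow> norm (\<integral> z. f (fst z - snd z) * g1 (fst z) * g2 (snd z) \<partial>(lborel \<Otimes>\<^sub>M lborel))
        \<le> C * L1 powr (5/12) * L2 powr (5/12) * L powr (5/12) * N powr (-1/2)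
            * (min (N1 / N2) (N2 / N1)) powr (1/6)"
proof (rule exI[of _ "1/64::real"], rule conjI, simp, rule exI[of _ "9437184::real"], intro allI impI)
  fix N N1 N2 L L1 L2 s :: real and f g1 g2 :: "pt \<Rightarrow> complex"
  assume H: "dyadic N \<and> dyadic N1 \<and> dyadic N2 \<and> dyadic L \<and> dyadic L1 \<and> dyadic L2
    \<and> (s = 1 \<or> s = -1)
    \<and> (N1 \<le> 1/64 * N2 \<or> N2 \<le> 1/64 * N1)
    \<and> unitL2_supp f (Pset N \<inter> Wset s L)
    \<and> unitL2_supp g1 (Pset N1 \<inter> Sset L1)
    \<and> unitL2_supp g2 (Pset N2 \<inter> Sset L2)"
  then have dy: "dyadic N" "dyadic N1" "dyadic N2" "dyadic L" "dyadic L1" "dyadic L2"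
    and sv: "s = 1 \<or> s = -1" and cN: "N1 \<le> 1/64 * N2 \<or> N2 \<le> 1/64 * N1"
    and uf: "unitL2_supp f (Pset N \<inter> Wset s L)" and u1: "unitL2_supp g1 (Pset N1 \<inter> Sset L1)"
    and u2: "unitL2_supp g2 (Pset N2 \<inter> Sset L2)" by auto
  have ge: "1 \<le> N" "1 \<le> N1" "1 \<le> N2" "1 \<le> L" "1 \<le> L1" "1 \<le> L2" using dy dyadic_ge by auto
  have s: "\<bar>s\<bar> \<le> 1" using sv by auto
  have gf: "good f (SFs N s L)" by (rule good_f[OF uf dy(1) dy(4)])
  have g1: "good g1 (SSs N1 L1)" by (rule good_g[OF u1 dy(2) dy(5)])
  have g2: "good g2 (SSs N2 L2)" by (rule good_g[OF u2 dy(3) dy(6)])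
  define I where "I = (\<integral> z. f (fst z - snd z) * g1 (fst z) * g2 (snd z) \<partial>(lborel \<Otimes>\<^sub>M lborel))"
  have rhs0: "0 \<le> 9437184 * L1 powr (5/12) * L2 powr (5/12) * L powr (5/12) * N powr (-1/2) * (min (N1 / N2) (N2 / N1)) powr (1/6)"
    by simp
  have "norm I \<le> 9437184 * L1 powr (5/12) * L2 powr (5/12) * L powr (5/12) * N powr (-1/2) * (min (N1 / N2) (N2 / N1)) powr (1/6)"
  proof (cases "I = 0")
    case True then show ?thesis using rhs0 by simp
  next
    case False
    then obtain z where nz: "f (fst z - snd z) \<noteq> 0" "g1 (fst z) \<noteq> 0" "g2 (snd z) \<noteq> 0"
      using nonzero_point unfolding I_def by blast
    have z1: "fst z \<in> SSs N1 L1" using g1 nz(2) unfolding good_def by blast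
    have z2: "snd z \<in> SSs N2 L2" using g2 nz(3) unfolding good_def by blast
    have z3: "fst z - snd z \<in> SFs N s L" using gf nz(1) unfolding good_def by blast
    show ?thesis
    proof (cases "N1 \<le> 1/64 * N2")
      case True
      then have c: "64 * N1 \<le> N2" by simp
      have "norm I \<le> 9437184 * L1 powr (5/12) * L2 powr (5/12) * L powr (5/12) * N powr (-1/2) * (N1/N2) powr (1/6)"
        unfolding I_def by (rule case_small1[OF gf g1 g2 ge s c z1 z2 z3])
      moreover have "min (N1 / N2) (N2 / N1) = N1/N2"
      proof -
        have "N1/N2 \<le> 1" "1 \<le> N2/N1" using c ge by auto
        then show ?thesis by simp
      qed
      ultimately show ?thesis by simp
    next
      case False
      then have c: "64 * N2 \<le> N1" using cN by simp
      have "norm I \<le> 9437184 * L1 powr (5/12) * L2 powr (5/12) * L powr (5/12) * N powr (-1/2) * (N2/N1) powr (1/6)"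
        unfolding I_def by (rule case_small2[OF gf g1 g2 ge s c z1 z2 z3])
      moreover have "min (N1 / N2) (N2 / N1) = N2/N1"
      proof -
        have "N2/N1 \<le> 1" "1 \<le> N1/N2" using c ge by auto
        then show ?thesis by simp
      qed
      ultimately show ?thesis by simp
    qed
  qed
  then show "norm (\<integral> z. f (fst z - snd z) * g1 (fst z) * g2 (snd z) \<partial>(lborel \<Otimes>\<^sub>M lborel))
        \<le> 9437184 * L1 powr (5/12) * L2 powr (5/12) * L powr (5/12) * N powr (-1/2)
            * (min (N1 / N2) (N2 / N1)) powr (1/6)" unfolding I_def .
qed



end
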